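(* For all basis elements $u,v$ of $H$ (hence, by linearity, for all $u,v\in H$), $$Z(u)\,Z(v)=Z(u*v).$$
   Context: $\mathbb P$ denotes the positive and $\mathbb N$ the nonnegative integers. Let $X=\{x_i:i\in\mathbb P\}$ be commuting indeterminates. GSym. $\mathrm{GSym}\subseteq\mathbb Q[[X]]$ is the $\mathbb Q$-span of the series $\widehat M_{\binom{\gamma}{\mu}}=\sum_{0<i_1<\cdots<i_m}i_1^{\mu_1}\cdots i_m^{\mu_m}x_{i_1}^{\gamma_1}\cdots x_{i_m}^{\gamma_m}$. Here $\gamma\in\mathbb N^m$ with $m=0$ or $\gamma_m>0$, and $\mu\in\mathbb N^m$. It is a subalgebra. The algebra $H$. $H$ is the quasi-shuffle algebra over $\mathbb Q$ with basis the matrices $\binom{\alpha}{\beta}=\binom{\alpha_1,\dots,\alpha_k}{\beta_1,\dots,\beta_k}$ with $\alpha\in\mathbb N^k$, $\beta\in\mathbb P^k$, $k\ge0$. Write $a_i$ for the $i$-th column. The product is determined by: the empty matrix $\emptyset$ is the unit, and $$a*b=(a_1,(a_2,\dots,a_m)*b)+(b_1,a*(b_2,\dots,b_n))+(a_1+b_1,(a_2,\dots,a_m)*(b_2,\dots,b_n)),$$ where columns are added componentwise and $(c,\sum\lambda_uu)=\sum\lambda_u(c,u)$. Regularization. $\phi\binom{\alpha}{\beta}\in\mathrm{GSym}[t][z^{-1},z]]$ is obtained from $$\sum_{0<i_1<\cdots<i_k}x_{i_1}^{\alpha_1}\cdots x_{i_k}^{\alpha_k}e^{(i_1+t)\beta_1z}\cdots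 e^{(i_k+t)\beta_kz}$$ as follows. For $t\ge0$ and $\mathrm{Re}(z)<0$, the coefficient of each $X$-monomial converges absolutely. It is expanded as a Laurent series in $z$ with coefficients in $\mathbb Q[t]$, and powers of $z$ and $t$ are collected. The resulting map $\phi:H\to\mathrm{GSym}[t][z^{-1},z]]$ is an algebra homomorphism. Renormalization. Let $P$ be the projection onto the polar part, $P(\sum_{n\ge m}a_nz^n)=\sum_{n<0}a_nz^n$. Set $\phi_-(\emptyset)=\phi_+(\emptyset)=1$. For $k\ge1$ define recursively $$\phi_-\tbinom{\alpha}{\beta}=-P\Big(\phi\tbinom{\alpha}{\beta}+\sum_{i=1}^{k-1}\phi\tbinom{\alpha_1,\dots,\alpha_i}{\beta_1,\dots,\beta_i}\phi_-\tbinom{\alpha_{i+1},\dots,\alpha_k}{\beta_{i+1},\dots,\beta_k}\Big),$$ $$\phi_+\tbinom{\alpha}{\beta}=(\mathrm{id}-P)\Big(\phi\tbinom{\alpha}{\beta}+\sum_{i=1}^{k-1}\phi\tbinom{\alpha_1,\dots,\alpha_i}{\beta_1,\dots,\beta_i}\phi_-\tbinom{\alpha_{i+1},\dots,\alpha_k}{\beta_{i+1},\dots,\beta_k}\Big).$$ These values lie in $\mathrm{GSym}[t][[z]]$. The directional quasisymmetric function is $Z\binom{\alpha}{\beta}:=\phi_+\binom{\alpha}{\beta}\big|_{z=0}\in\mathrm{GSym}[t]$. $Z$ is extended linearly to $H$. *)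

theory Defs
  imports "HOL-Complex_Analysis.Complex_Analysis" "HOL-Library.Poly_Mapping"
    "HOL-Computational_Algebra.Polynomial"
begin

text \<open>X-monomials: finitely supported exponent vectors (variable x_i for index i).
  Elements of Q[[X]][t] are represented by their coefficient functions
  (X-monomial, power of t) to rational number.\<close>
type_synonym mono = "nat \<Rightarrow>\<^sub>0 nat"
type_synonym xt = "mono \<Rightarrow> nat \<Rightarrow> rat"

text \<open>Laurent series in z with coefficients in Q[[X]][t]: z-power to coefficient.\<close>
type_synonym lser = "int \<Rightarrow> xt"

definition xt_one :: xt where
  "xt_one m a = (if m = 0 \<and> a = 0 then 1 else 0)"

definition xt_mul :: "xt \<Rightarrow> xt \<Rightarrow> xt" where
  "xt_mul f g m a = (\<Sum>p\<in>{p. fst p + snd p = m}. \<Sum>b\<le>a. f (fst p) b * g (snd p) (a - b))"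

definition lser_one :: lser where
  "lser_one n = (if n = 0 then xt_one else (\<lambda>_ _. 0))"

text \<open>Product of Laurent series (whose z-supports are bounded below, so the sum is finite).\<close>
definition lser_mul :: "lser \<Rightarrow> lser \<Rightarrow> lser" where
  "lser_mul F G n m a =
     (\<Sum>i\<in>{i. F i \<noteq> (\<lambda>_ _. 0) \<and> G (n - i) \<noteq> (\<lambda>_ _. 0)}. xt_mul (F i) (G (n - i)) m a)"

definition lser_add :: "lser \<Rightarrow> lser \<Rightarrow> lser" where
  "lser_add F G n m a = F n m a + G n m a"

definition polar :: "lser \<Rightarrow> lser" where
  "polar F n = (if n < 0 then F n else (\<lambda>_ _. 0))"

text \<open>A basis element (alpha over beta) is the list of its columns (alpha_i, beta_i).\<close>
type_synonym col = "nat \<times> nat"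
type_synonym word = "col list"

definition is_basis :: "word \<Rightarrow> bool" where
  "is_basis w \<longleftrightarrow> (\<forall>c\<in>set w. snd c > 0)"

definition col_add :: "col \<Rightarrow> col \<Rightarrow> col" where
  "col_add a b = (fst a + fst b, snd a + snd b)"

text \<open>Quasi-shuffle product of basis elements, as a list of basis elements
  (their formal sum, with multiplicity).\<close>
fun qsh :: "word \<Rightarrow> word \<Rightarrow> word list" where
  "qsh [] v = [v]"
| "qsh u [] = [u]"
| "qsh (a # u) (b # v) =
     map ((#) a) (qsh u (b # v)) @ map ((#) b) (qsh (a # u) v) @ map ((#) (col_add a b)) (qsh u v)"

definition tuple_mono :: "word \<Rightarrow> nat list \<Rightarrow> mono" where
  "tuple_mono w is = (\<Sum>j<length w. Poly_Mapping.single (is ! j) (fst (w ! j)))"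

definition tuples :: "word \<Rightarrow> mono \<Rightarrow> nat list set" where
  "tuples w m = {is. length is = length w \<and> sorted_wrt (<) is \<and> (\<forall>i\<in>set is. 0 < i)
                      \<and> tuple_mono w is = m}"

text \<open>Coefficient of the X-monomial m in the generating series, as a function of
  t (real, t \<ge> 0) and z (complex, Re z < 0).\<close>
definition phi_fun :: "word \<Rightarrow> mono \<Rightarrow> real \<Rightarrow> complex \<Rightarrow> complex" where
  "phi_fun w m t z =
     (\<Sum>\<^sub>\<infinity>is\<in>tuples w m.
        \<Prod>j<length w. exp ((of_nat (is ! j) + of_real t) * of_nat (snd (w ! j)) * z))"

definition has_laurent_expansion_left :: "(complex \<Rightarrow> complex) \<Rightarrow> complex fls \<Rightarrow> bool" where
  "has_laurent_expansion_left f F \<longleftrightarrow>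
     fls_conv_radius F > 0 \<and> eventually (\<lambda>z. eval_fls F z = f z) (at 0 within {z. Re z < 0})"

definition laurent_coeff :: "(complex \<Rightarrow> complex) \<Rightarrow> int \<Rightarrow> complex" where
  "laurent_coeff f n = fls_nth (THE F. has_laurent_expansion_left f F) n"

text \<open>The coefficient of z^n (for the X-monomial m) is a polynomial in t with rational coefficients.\<close>
definition phi_poly :: "word \<Rightarrow> mono \<Rightarrow> int \<Rightarrow> rat poly" where
  "phi_poly w m n = (THE p. \<forall>t\<ge>0. laurent_coeff (phi_fun w m t) n
                                    = complex_of_real (poly (map_poly real_of_rat p) t))"

definition phi :: "word \<Rightarrow> lser" where
  "phi w n m a = coeff (phi_poly w m n) a"

function phi_minus :: "word \<Rightarrow> lser" where
  "phi_minus [] = lser_one"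
| "phi_minus (c # w) =
     (let u = c # w;
          S = (\<lambda>n m a. phi u n m a
                 + (\<Sum>i\<in>{1..<length u}. lser_mul (phi (take i u)) (phi_minus (drop i u)) n m a))
      in (\<lambda>n m a. - polar S n m a))"
  by pat_completeness auto
termination
  by (relation "Wellfounded.measure length") auto

definition renorm_sum :: "word \<Rightarrow> lser" where
  "renorm_sum u = (\<lambda>n m a. phi u n m a
                 + (\<Sum>i\<in>{1..<length u}. lser_mul (phi (take i u)) (phi_minus (drop i u)) n m a))"

definition phi_plus :: "word \<Rightarrow> lser" where
  "phi_plus u = (if u = [] then lser_one
                 else (\<lambda>n. if n < 0 then (\<lambda>_ _. 0) else renorm_sum u n))"

definition Zq :: "word \<Rightarrow> xt" where
  "Zq u = phi_plus u 0"

definition Zsum :: "word list \<Rightarrow> xt" where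
  "Zsum ws m a = (\<Sum>w\<leftarrow>ws. Zq w m a)"

end

theory Submission
  imports Defs
begin

unbundle fps_syntax


abbreviation lk :: "mono \<Rightarrow> nat \<Rightarrow> nat" where "lk \<equiv> Poly_Mapping.lookup"

definition spl :: "mono \<Rightarrow> (mono \<times> mono) set" where
  "spl m = {p. fst p + snd p = m}"

lemma finite_le_mono: "finite {x::mono. \<forall>k. lk x k \<le> lk m k}"
proof -
  let ?S = "{x::mono. \<forall>k. lk x k \<le> lk m k}"
  have inj: "inj_on (\<lambda>x. restrict (lk x) (Poly_Mapping.keys m)) ?S"
  proof (rule inj_onI)
    fix x y assume x: "x \<in> ?S" and y: "y \<in> ?S"
      and e: "restrict (lk x) (Poly_Mapping.keys m) = restrict (lk y) (Poly_Mapping.keys m)"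
    show "x = y"
    proof (rule poly_mapping_eqI)
      fix k show "lk x k = lk y k"
      proof (cases "k \<in> Poly_Mapping.keys m")
        case True then show ?thesis using e by (metis restrict_apply')
      next
        case False then have "lk m k = 0" by (simp add: in_keys_iff)
        then show ?thesis using x y by (metis (mono_tags, lifting) le_zero_eq mem_Collect_eq)
      qed
    qed
  qed
  have sub: "(\<lambda>x. restrict (lk x) (Poly_Mapping.keys m)) ` ?S \<subseteq> PiE (Poly_Mapping.keys m) (\<lambda>k. {..lk m k})"
    by auto
  have fin: "finite (PiE (Poly_Mapping.keys m) (\<lambda>k. {..lk m k}))"
    by (intro finite_PiE) auto
  have "finite ((\<lambda>x. restrict (lk x) (Poly_Mapping.keys m)) ` ?S)"
    using finite_subset[OF sub fin] .
  then show ?thesis using finite_imageD[OF _ inj] by blast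
qed

lemma finite_spl [simp]: "finite (spl m)"
proof -
  have "spl m \<subseteq> {x::mono. \<forall>k. lk x k \<le> lk m k} \<times> {x::mono. \<forall>k. lk x k \<le> lk m k}"
    by (auto simp: spl_def lookup_add)
  then show ?thesis using finite_le_mono finite_SigmaI finite_subset by fast
qed

typedef 'a mps = "UNIV :: (mono \<Rightarrow> 'a) set" morphisms mpc Abs_mps by auto
setup_lifting type_definition_mps

lemma mps_eqI: "(\<And>m. mpc f m = mpc g m) \<Longrightarrow> f = g"
  by (metis mpc_inject ext)

instantiation mps :: (comm_ring_1) comm_ring_1
begin
lift_definition zero_mps :: "'a mps" is "\<lambda>_. 0" .
lift_definition one_mps :: "'a mps" is "\<lambda>m. if m = 0 then 1 else 0" .
lift_definition plus_mps :: "'a mps \<Rightarrow> 'a mps \<Rightarrow> 'a mps" is "\<lambda>f g m. f m + g m" .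
lift_definition minus_mps :: "'a mps \<Rightarrow> 'a mps \<Rightarrow> 'a mps" is "\<lambda>f g m. f m - g m" .
lift_definition uminus_mps :: "'a mps \<Rightarrow> 'a mps" is "\<lambda>f m. - f m" .
lift_definition times_mps :: "'a mps \<Rightarrow> 'a mps \<Rightarrow> 'a mps" is
  "\<lambda>f g m. \<Sum>p\<in>spl m. f (fst p) * g (snd p)" .
instance
proof
  fix a b c :: "'a mps"
  show "a * b * c = a * (b * c)"
  proof (rule mps_eqI)
    fix m
    have "mpc (a * b * c) m = (\<Sum>p\<in>spl m. \<Sum>q\<in>spl (fst p). mpc a (fst q) * mpc b (snd q) * mpc c (snd p))"
      by (simp add: times_mps.rep_eq sum_distrib_right)
    also have "\<dots> = (\<Sum>(p,q)\<in>Sigma (spl m) (\<lambda>p. spl (fst p)). mpc a (fst q) * mpc b (snd q) * mpc c (snd p))"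
      by (rule sum.Sigma) auto
    also have "\<dots> = (\<Sum>(p,q)\<in>Sigma (spl m) (\<lambda>p. spl (snd p)). mpc a (fst p) * (mpc b (fst q) * mpc c (snd q)))"
      by (rule sum.reindex_bij_witness[where i = "\<lambda>((a,y),(b,c)). ((a+b,c),(a,b))" and j = "\<lambda>((x,c),(a,b)). ((a,b+c),(b,c))"])
         (auto simp: spl_def add.assoc mult.assoc)
    also have "\<dots> = (\<Sum>p\<in>spl m. \<Sum>q\<in>spl (snd p). mpc a (fst p) * (mpc b (fst q) * mpc c (snd q)))"
      by (rule sum.Sigma[symmetric]) auto
    also have "\<dots> = mpc (a * (b * c)) m"
      by (simp add: times_mps.rep_eq sum_distrib_left)
    finally show "mpc (a * b * c) m = mpc (a * (b * c)) m" .
  qed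
  show "a * b = b * a"
  proof (rule mps_eqI)
    fix m show "mpc (a * b) m = mpc (b * a) m"
      unfolding times_mps.rep_eq
      by (rule sum.reindex_bij_witness[where i = "\<lambda>(x,y). (y,x)" and j = "\<lambda>(x,y). (y,x)"])
         (auto simp: spl_def add.commute mult.commute)
  qed
  show "1 * a = a"
  proof (rule mps_eqI)
    fix m
    have "mpc (1 * a) m = (\<Sum>p\<in>spl m. (if fst p = 0 then 1 else 0) * mpc a (snd p))"
      by (simp add: times_mps.rep_eq one_mps.rep_eq)
    also have "\<dots> = (if fst (0::mono,m) = 0 then 1 else 0) * mpc a (snd (0::mono,m))"
    proof (subst sum.remove[OF finite_spl, of "(0,m)"])
      show "(0, m) \<in> spl m" by (simp add: spl_def)
      show "(if fst (0::mono, m) = 0 then 1 else 0) * mpc a (snd (0::mono, m)) +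
        (\<Sum>p\<in>spl m - {(0, m)}. (if fst p = 0 then 1 else 0) * mpc a (snd p)) =
        (if fst (0::mono, m) = 0 then 1 else 0) * mpc a (snd (0::mono, m))"
        by (subst sum.neutral) (auto simp: spl_def)
    qed
    finally show "mpc (1 * a) m = mpc a m" by simp
  qed
  show "(a + b) * c = a * c + b * c"
    by (rule mps_eqI) (simp add: times_mps.rep_eq plus_mps.rep_eq distrib_right sum.distrib)
  show "0 + a = a" by (rule mps_eqI) (simp add: plus_mps.rep_eq zero_mps.rep_eq)
  show "a + b + c = a + (b + c)" by (rule mps_eqI) (simp add: plus_mps.rep_eq)
  show "a + b = b + a" by (rule mps_eqI) (simp add: plus_mps.rep_eq)
  show "- a + a = 0" by (rule mps_eqI) (simp add: plus_mps.rep_eq zero_mps.rep_eq uminus_mps.rep_eq)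
  show "a - b = a + - b" by (rule mps_eqI) (simp add: plus_mps.rep_eq minus_mps.rep_eq uminus_mps.rep_eq)
  show "(0::'a mps) \<noteq> 1"
  proof
    assume "(0::'a mps) = 1"
    then have "mpc (0::'a mps) 0 = mpc 1 0" by simp
    then show False by (simp add: zero_mps.rep_eq one_mps.rep_eq)
  qed
qed
end

lemma mpc_sum: "mpc (sum f A) m = (\<Sum>x\<in>A. mpc (f x) m)"
  by (induction A rule: infinite_finite_induct) (auto simp: plus_mps.rep_eq zero_mps.rep_eq)

lemma mpc_sum_list: "mpc (sum_list (map f xs)) m = (\<Sum>x\<leftarrow>xs. mpc (f x) m)"
  by (induction xs) (auto simp: plus_mps.rep_eq zero_mps.rep_eq)


definition polf :: "'a::comm_ring_1 fls \<Rightarrow> 'a fls" where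
  "polf F = F - fps_to_fls (fls_regpart F)"

lemma polf_nth [simp]: "polf F $$ n = (if n < 0 then F $$ n else 0)"
  by (simp add: polf_def)

definition isreg :: "'a::comm_ring_1 fls \<Rightarrow> bool" where
  "isreg X \<longleftrightarrow> (\<forall>n<0. X $$ n = 0)"
definition ispol :: "'a::comm_ring_1 fls \<Rightarrow> bool" where
  "ispol X \<longleftrightarrow> (\<forall>n\<ge>0. X $$ n = 0)"

lemma isreg_mult: "isreg X \<Longrightarrow> isreg Y \<Longrightarrow> isreg (X * Y)"
proof -
  assume X: "isreg X" and Y: "isreg Y"
  show ?thesis
  proof (cases "X = 0 \<or> Y = 0")
    case True then show ?thesis by (auto simp: isreg_def)
  next
    case False
    then have "0 \<le> fls_subdegree X" "0 \<le> fls_subdegree Y"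
      using X Y by (auto intro!: fls_subdegree_ge0I simp: isreg_def)
    then show ?thesis unfolding isreg_def
      by (intro allI impI fls_times_nth_eq0) auto
  qed
qed

lemma ispol_mult: "ispol X \<Longrightarrow> ispol Y \<Longrightarrow> ispol (X * Y)"
  unfolding ispol_def
proof (intro allI impI)
  fix n :: int assume X: "\<forall>n\<ge>0. X $$ n = 0" and Y: "\<forall>n\<ge>0. Y $$ n = 0" and n: "0 \<le> n"
  have "(X * Y) $$ n = (\<Sum>i=fls_subdegree X..n - fls_subdegree Y. X $$ i * Y $$ (n - i))"
    by (rule fls_times_nth(2))
  also have "\<dots> = 0"
  proof (rule sum.neutral, rule ballI)
    fix i assume "i \<in> {fls_subdegree X..n - fls_subdegree Y}"
    show "X $$ i * Y $$ (n - i) = 0"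
      using X Y n by (cases "0 \<le> i") auto
  qed
  finally show "(X * Y) $$ n = 0" .
qed

lemma polf_reg: "isreg X \<Longrightarrow> polf X = 0"
  by (simp add: fls_eq_iff isreg_def)
lemma polf_pol: "ispol X \<Longrightarrow> polf X = X"
  by (simp add: fls_eq_iff ispol_def)
lemma ispol_polf: "ispol (polf X)"
  by (simp add: ispol_def)
lemma ispol_uminus: "ispol X \<Longrightarrow> ispol (- X)"
  by (simp add: ispol_def)
lemma polf_add: "polf (X + Y) = polf X + polf Y"
  by (simp add: fls_eq_iff)
lemma polf_diff: "polf (X - Y) = polf X - polf Y"
  by (simp add: fls_eq_iff)
lemma polf_uminus: "polf (- X) = - polf X"
  by (simp add: fls_eq_iff)
lemma polf_sum_list: "polf (\<Sum>w\<leftarrow>ws. f w) = (\<Sum>w\<leftarrow>ws. polf (f w))"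
  by (induction ws) (auto simp: polf_add fls_eq_iff)

function phm :: "(word \<Rightarrow> 'a::comm_ring_1 fls) \<Rightarrow> word \<Rightarrow> 'a fls" where
  "phm F [] = 1"
| "phm F (c # w) = - polf (F (c # w) +
      (\<Sum>i\<in>{1..<length (c # w)}. F (take i (c # w)) * phm F (drop i (c # w))))"
  by pat_completeness auto
termination
  by (relation "Wellfounded.measure (\<lambda>(F, w). length w)") auto

definition phbar :: "(word \<Rightarrow> 'a::comm_ring_1 fls) \<Rightarrow> word \<Rightarrow> 'a fls" where
  "phbar F u = F u + (\<Sum>i\<in>{1..<length u}. F (take i u) * phm F (drop i u))"

definition php :: "(word \<Rightarrow> 'a::comm_ring_1 fls) \<Rightarrow> word \<Rightarrow> 'a fls" where
  "php F u = (if u = [] then 1 else phbar F u + phm F u)"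

lemma phm_ne: "u \<noteq> [] \<Longrightarrow> phm F u = - polf (phbar F u)"
  by (cases u) (simp_all add: phbar_def)

lemma ispol_phm: "u \<noteq> [] \<Longrightarrow> ispol (phm F u)"
  by (simp add: phm_ne ispol_uminus ispol_polf)

lemma isreg_php: "isreg (php F u)"
  by (auto simp: php_def phm_ne isreg_def)

lemma php_conv:
  assumes F1: "F [] = 1"
  shows "php F u = (\<Sum>i\<le>length u. F (take i u) * phm F (drop i u))"
proof (cases "u = []")
  case True then show ?thesis by (simp add: php_def F1)
next
  case False
  then have l: "0 < length u" by simp
  have "{..length u} = insert 0 (insert (length u) {1..<length u})"
    using l by auto
  then have "(\<Sum>i\<le>length u. F (take i u) * phm F (drop i u))
     = F [] * phm F u + (F u * phm F [] + (\<Sum>i\<in>{1..<length u}. F (take i u) * phm F (drop i u)))"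
    using l by simp
  then show ?thesis using False by (simp add: php_def phbar_def F1 algebra_simps)
qed

abbreviation QS :: "(word \<Rightarrow> 'a::comm_ring_1) \<Rightarrow> word \<Rightarrow> word \<Rightarrow> 'a" where
  "QS f x y \<equiv> (\<Sum>a\<leftarrow>qsh x y. f a)"

lemma qsh_Nil2 [simp]: "qsh x [] = [x]"
  by (cases x) auto

lemma qsh_Nil_mem: "[] \<in> set (qsh u v) \<Longrightarrow> u = [] \<and> v = []"
  by (induction u v rule: qsh.induct) auto

lemma D_cons:
  "(\<Sum>i\<le>length (c # w). f (take i (c # w)) * g (drop i (c # w)))
   = f [] * g (c # w) + (\<Sum>i\<le>length w. f (c # take i w) * g (drop i w))"
  by (simp only: length_Cons sum.atMost_Suc_shift) simp

lemma Q_cons: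
  "QS f (a # x) (b # y) = QS (\<lambda>w. f (a # w)) x (b # y) + QS (\<lambda>w. f (b # w)) (a # x) y
     + QS (\<lambda>w. f (col_add a b # w)) x y"
  by (simp add: comp_def)

lemma coproduct:
  fixes f g :: "word \<Rightarrow> 'a::comm_ring_1"
  shows "(\<Sum>w\<leftarrow>qsh u v. \<Sum>i\<le>length w. f (take i w) * g (drop i w))
       = (\<Sum>i\<le>length u. \<Sum>j\<le>length v. QS f (take i u) (take j v) * QS g (drop i u) (drop j v))"
proof (induction u v arbitrary: f rule: qsh.induct)
  case (1 v) then show ?case by simp
next
  case (2 a u) then show ?case by simp
next
  case (3 a u b v)
  let ?D = "\<lambda>f w. (\<Sum>i\<le>length w. f (take i w) * g (drop i w))"
  have "(\<Sum>w\<leftarrow>qsh (a # u) (b # v). ?D f w)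
      = (\<Sum>w\<leftarrow>qsh u (b # v). ?D f (a # w)) + (\<Sum>w\<leftarrow>qsh (a # u) v. ?D f (b # w))
        + (\<Sum>w\<leftarrow>qsh u v. ?D f (col_add a b # w))"
    by (simp add: comp_def)
  also have "\<dots> = f [] * QS g (a # u) (b # v)
     + (\<Sum>w\<leftarrow>qsh u (b # v). ?D (\<lambda>x. f (a # x)) w)
     + (\<Sum>w\<leftarrow>qsh (a # u) v. ?D (\<lambda>x. f (b # x)) w)
     + (\<Sum>w\<leftarrow>qsh u v. ?D (\<lambda>x. f (col_add a b # x)) w)"
    unfolding D_cons by (simp add: sum_list_addf sum_list_const_mult comp_def algebra_simps)
  also have "\<dots> = f [] * QS g (a # u) (b # v)
     + (\<Sum>i\<le>length u. \<Sum>j\<le>length (b # v). QS (\<lambda>x. f (a # x)) (take i u) (take j (b # v)) * QS g (drop i u) (drop j (b # v)))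
     + (\<Sum>i\<le>length (a # u). \<Sum>j\<le>length v. QS (\<lambda>x. f (b # x)) (take i (a # u)) (take j v) * QS g (drop i (a # u)) (drop j v))
     + (\<Sum>i\<le>length u. \<Sum>j\<le>length v. QS (\<lambda>x. f (col_add a b # x)) (take i u) (take j v) * QS g (drop i u) (drop j v))"
    unfolding "3.IH"(1)[of "\<lambda>x. f (a # x)"] "3.IH"(2)[of "\<lambda>x. f (b # x)"] "3.IH"(3)[of "\<lambda>x. f (col_add a b # x)"]
    by (rule refl)
  also have "\<dots> = (\<Sum>i\<le>length (a # u). \<Sum>j\<le>length (b # v). QS f (take i (a # u)) (take j (b # v)) * QS g (drop i (a # u)) (drop j (b # v)))"
    by (simp only: length_Cons sum.atMost_Suc_shift take_Suc_Cons drop_Suc_Cons take_0 drop_0 Q_cons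
        qsh.simps(1) qsh_Nil2 list.map sum_list.Cons sum_list.Nil add_0_right distrib_right sum.distrib)
       (simp add: algebra_simps)
  finally show ?case .
qed

lemma sum_sum_00:
  fixes n m :: nat and h :: "nat \<Rightarrow> nat \<Rightarrow> 'a::comm_monoid_add"
  assumes "\<And>i j. i \<noteq> 0 \<or> j \<noteq> 0 \<Longrightarrow> h i j = (0::'a::comm_monoid_add)"
  shows "(\<Sum>i\<le>n. \<Sum>j\<le>m. h i j) = h 0 0"
proof -
  have "(\<Sum>i\<le>n. \<Sum>j\<le>m. h i j) = (\<Sum>i\<le>n. if i = 0 then h 0 0 else 0)"
  proof (rule sum.cong[OF refl])
    fix i assume "i \<in> {..n}"
    show "(\<Sum>j\<le>m. h i j) = (if i = 0 then h 0 0 else 0)"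
    proof (cases "i = 0")
      case True
      have "(\<Sum>j\<le>m. h 0 j) = (\<Sum>j\<le>m. if j = 0 then h 0 0 else 0)"
        by (rule sum.cong) (auto simp: assms)
      then show ?thesis using True by (subst (asm) sum.delta) simp_all
    next
      case False then show ?thesis by (simp add: assms)
    qed
  qed
  also have "\<dots> = h 0 0" by (subst sum.delta) simp_all
  finally show ?thesis .
qed

lemma sum_list_neg: "(\<Sum>w\<leftarrow>ws. - f w) = - (\<Sum>w\<leftarrow>ws. f w :: 'a::ab_group_add)"
  by (induction ws) auto

theorem birkhoff:
  fixes F :: "word \<Rightarrow> 'a::comm_ring_1 fls" and B :: "word \<Rightarrow> bool"
  assumes F1: "F [] = 1"
    and mult: "\<And>u v. B u \<Longrightarrow> B v \<Longrightarrow> F u * F v = QS F u v"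
    and Bt: "\<And>u i. B u \<Longrightarrow> B (take i u)" and Bd: "\<And>u i. B u \<Longrightarrow> B (drop i u)"
  shows "B u \<Longrightarrow> B v \<Longrightarrow> phm F u * phm F v = QS (phm F) u v \<and> php F u * php F v = QS (php F) u v"
proof (induction "length u + length v" arbitrary: u v rule: less_induct)
  case less
  show ?case
  proof (cases "u = [] \<or> v = []")
    case True
    then show ?thesis by (auto simp: php_def)
  next
    case False
    then have une: "u \<noteq> []" and vne: "v \<noteq> []" by auto
    have wne: "\<And>w. w \<in> set (qsh u v) \<Longrightarrow> w \<noteq> []"
      using qsh_Nil_mem une by blast
    let ?T = "\<lambda>i j. F (take i u) * F (take j v) * (phm F (drop i u) * phm F (drop j v))"
    let ?R = "\<lambda>i j. QS F (take i u) (take j v) * QS (phm F) (drop i u) (drop j v)"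
    have e1: "php F u * php F v = (\<Sum>i\<le>length u. \<Sum>j\<le>length v. ?T i j)"
      unfolding php_conv[where F=F, OF F1] sum_product by (simp add: algebra_simps)
    have e2: "QS (php F) u v = (\<Sum>i\<le>length u. \<Sum>j\<le>length v. ?R i j)"
      unfolding php_conv[where F=F, OF F1] by (rule coproduct)
    have e3: "(\<Sum>i\<le>length u. \<Sum>j\<le>length v. ?T i j - ?R i j) = ?T 0 0 - ?R 0 0"
    proof (rule sum_sum_00)
      fix i j :: nat assume ij: "i \<noteq> 0 \<or> j \<noteq> 0"
      have "phm F (drop i u) * phm F (drop j v) = QS (phm F) (drop i u) (drop j v)"
      proof (cases "i \<le> length u \<and> j \<le> length v")
        case True
        then have "length (drop i u) + length (drop j v) < length u + length v"
          using ij une vne by auto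
        then show ?thesis using less.hyps Bd less.prems by blast
      next
        case False
        have "length (drop i u) + length (drop j v) < length u + length v \<or> (drop i u = [] \<or> drop j v = [])"
          using False by auto
        then show ?thesis
        proof
          assume "length (drop i u) + length (drop j v) < length u + length v"
          then show ?thesis using less.hyps Bd less.prems by blast
        next
          assume "drop i u = [] \<or> drop j v = []"
          then show ?thesis by auto
        qed
      qed
      moreover have "F (take i u) * F (take j v) = QS F (take i u) (take j v)"
        using mult Bt less.prems by blast
      ultimately show "?T i j - ?R i j = 0" by simp
    qed
    have e4: "php F u * php F v - QS (php F) u v = phm F u * phm F v - QS (phm F) u v"
      using e1 e2 e3 F1 by (simp add: sum_subtractf)
    have e5: "QS (php F) u v = QS (phbar F) u v + QS (phm F) u v"
      using wne by (simp add: php_def sum_list_addf[symmetric] cong: map_cong)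
    have e6: "QS (phbar F) u v = php F u * php F v - phm F u * phm F v"
      using e4 e5 by (simp add: algebra_simps)
    have e7: "QS (phm F) u v = - polf (QS (phbar F) u v)"
      using wne by (simp add: phm_ne polf_sum_list sum_list_neg cong: map_cong)
    also have "\<dots> = - polf (php F u * php F v) + polf (phm F u * phm F v)"
      by (simp add: e6 polf_diff)
    also have "\<dots> = phm F u * phm F v"
      by (simp add: polf_reg isreg_mult isreg_php polf_pol ispol_mult ispol_phm une vne)
    finally have m: "phm F u * phm F v = QS (phm F) u v" ..
    then show ?thesis using e4 by simp
  qed
qed


type_synonym ps = "rat poly mps"

lemma fls_mult_nth_bounds:
  fixes F G :: "'a::comm_ring_1 fls"
  assumes F: "\<And>i. i < a \<Longrightarrow> F $$ i = 0" and G: "\<And>i. i < b \<Longrightarrow> G $$ i = 0"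
  shows "(F * G) $$ n = (\<Sum>i\<in>{a..n-b}. F $$ i * G $$ (n - i))"
proof (cases "F = 0 \<or> G = 0")
  case True then show ?thesis by auto
next
  case False
  then have dF: "a \<le> fls_subdegree F" and dG: "b \<le> fls_subdegree G"
    using F G by (auto intro!: fls_subdegree_geI)
  have "(F * G) $$ n = (\<Sum>i=fls_subdegree F..n - fls_subdegree G. F $$ i * G $$ (n - i))"
    by (rule fls_times_nth(2))
  also have "\<dots> = (\<Sum>i\<in>{a..n-b}. F $$ i * G $$ (n - i))"
  proof (rule sum.mono_neutral_left)
    show "finite {a..n-b}" by simp
    show "{fls_subdegree F..n - fls_subdegree G} \<subseteq> {a..n-b}" using dF dG by auto
    show "\<forall>i\<in>{a..n - b} - {fls_subdegree F..n - fls_subdegree G}. F $$ i * G $$ (n - i) = 0"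
      by auto
  qed
  finally show ?thesis .
qed

definition emb :: "ps fls \<Rightarrow> lser" where
  "emb F n m a = coeff (mpc (F $$ n) m) a"

lemma emb_zero_iff: "emb F i = (\<lambda>_ _. 0) \<longleftrightarrow> F $$ i = 0"
proof
  assume "emb F i = (\<lambda>_ _. 0)"
  then have "\<And>m a. coeff (mpc (F $$ i) m) a = 0" by (metis emb_def)
  then have "\<And>m. mpc (F $$ i) m = 0" by (simp add: poly_eq_iff)
  then show "F $$ i = 0" by (intro mps_eqI) (simp add: zero_mps.rep_eq)
qed (simp add: emb_def fun_eq_iff zero_mps.rep_eq)

lemma xt_mul_emb:
  "xt_mul (\<lambda>m a. coeff (mpc x m) a) (\<lambda>m a. coeff (mpc y m) a) = (\<lambda>m a. coeff (mpc (x * y) m) a)"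
  by (simp add: xt_mul_def fun_eq_iff times_mps.rep_eq coeff_sum coeff_mult spl_def)

lemma xt_mul_emb':
  "xt_mul (\<lambda>m a. coeff (mpc x m) a) (\<lambda>m a. coeff (mpc y m) a) m a = coeff (mpc (x * y) m) a"
  by (simp add: xt_mul_def times_mps.rep_eq coeff_sum coeff_mult spl_def)

lemma lser_mul_emb: "lser_mul (emb X) (emb Y) = emb (X * Y)"
proof (intro ext)
  fix n m a
  let ?S = "{i. emb X i \<noteq> (\<lambda>_ _. 0) \<and> emb Y (n - i) \<noteq> (\<lambda>_ _. 0)}"
  have S: "?S = {i. X $$ i \<noteq> 0 \<and> Y $$ (n - i) \<noteq> 0}"
    by (simp add: emb_zero_iff)
  have "emb (X * Y) n m a = coeff (mpc (\<Sum>i\<in>{fls_subdegree X..n - fls_subdegree Y}. X $$ i * Y $$ (n - i)) m) a"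
    by (simp add: emb_def fls_times_nth(2))
  also have "\<dots> = (\<Sum>i\<in>{fls_subdegree X..n - fls_subdegree Y}. coeff (mpc (X $$ i * Y $$ (n - i)) m) a)"
    by (simp add: mpc_sum coeff_sum)
  also have "\<dots> = (\<Sum>i\<in>?S. coeff (mpc (X $$ i * Y $$ (n - i)) m) a)"
  proof (rule sum.mono_neutral_right)
    show "finite {fls_subdegree X..n - fls_subdegree Y}" by simp
    show "?S \<subseteq> {fls_subdegree X..n - fls_subdegree Y}"
      unfolding S using fls_subdegree_leI by fastforce
    show "\<forall>i\<in>{fls_subdegree X..n - fls_subdegree Y} - ?S. coeff (mpc (X $$ i * Y $$ (n - i)) m) a = 0"
      unfolding S by (auto simp: zero_mps.rep_eq)
  qed
  also have "\<dots> = lser_mul (emb X) (emb Y) n m a"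
    unfolding lser_mul_def emb_def by (simp only: xt_mul_emb')
  finally show "lser_mul (emb X) (emb Y) n m a = emb (X * Y) n m a" ..
qed

lemma emb_one: "emb 1 = lser_one"
  by (auto simp: emb_def lser_one_def xt_one_def fun_eq_iff one_mps.rep_eq zero_mps.rep_eq)

lemma emb_add: "emb (X + Y) n m a = emb X n m a + emb Y n m a"
  by (simp add: emb_def plus_mps.rep_eq)

lemma emb_sum: "emb (\<Sum>i\<in>A. f i) n m a = (\<Sum>i\<in>A. emb (f i) n m a)"
  by (simp add: emb_def fls_nth_sum mpc_sum coeff_sum)

lemma emb_uminus: "emb (- X) n m a = - emb X n m a"
  by (simp add: emb_def uminus_mps.rep_eq)

lemma emb_polf: "emb (polf X) = polar (emb X)"
  by (auto simp: emb_def polar_def fun_eq_iff zero_mps.rep_eq)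

lemma fls_nth_sum_list: "(\<Sum>w\<leftarrow>ws. f w) $$ n = (\<Sum>w\<leftarrow>ws. f w $$ n)"
  by (induction ws) auto

lemma mpc_sum_list': "mpc (\<Sum>w\<leftarrow>ws. f w) m = (\<Sum>w\<leftarrow>ws. mpc (f w) m)"
  by (induction ws) (auto simp: plus_mps.rep_eq zero_mps.rep_eq)

lemma coeff_sum_list: "coeff (\<Sum>w\<leftarrow>ws. f w) a = (\<Sum>w\<leftarrow>ws. coeff (f w) a)"
  by (induction ws) auto

lemma is_basis_take: "is_basis u \<Longrightarrow> is_basis (take i u)"
  unfolding is_basis_def by (meson in_set_takeD)
lemma is_basis_drop: "is_basis u \<Longrightarrow> is_basis (drop i u)"
  unfolding is_basis_def by (meson in_set_dropD)
lemma is_basis_qsh: "is_basis u \<Longrightarrow> is_basis v \<Longrightarrow> w \<in> set (qsh u v) \<Longrightarrow> is_basis w"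
proof (induction u v arbitrary: w rule: qsh.induct)
  case (1 v) then show ?case by simp
next
  case (2 a u) then show ?case by simp
next
  case (3 a u b v)
  have a: "snd a > 0" and b: "snd b > 0" and u: "is_basis u" and v: "is_basis v"
    using "3.prems"(1,2) by (simp_all add: is_basis_def)
  have ab: "snd (col_add a b) > 0" using a by (simp add: col_add_def)
  from "3.prems"(3) consider
      (x) w' where "w = a # w'" "w' \<in> set (qsh u (b # v))"
    | (y) w' where "w = b # w'" "w' \<in> set (qsh (a # u) v)"
    | (z) w' where "w = col_add a b # w'" "w' \<in> set (qsh u v)"
    by auto
  then show ?case
  proof cases
    case x then show ?thesis using "3.IH"(1)[OF u "3.prems"(2)] a by (simp add: is_basis_def)
  next
    case y then show ?thesis using "3.IH"(2)[OF "3.prems"(1) v] b by (simp add: is_basis_def)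
  next
    case z then show ?thesis using "3.IH"(3)[OF u v] ab by (simp add: is_basis_def)
  qed
qed



definition Phi :: "word \<Rightarrow> ps fls" where
  "Phi w = Abs_fls (\<lambda>n. Abs_mps (\<lambda>m. phi_poly w m n))"

locale analytic_facts =
  assumes bound: "\<And>w m n. is_basis w \<Longrightarrow> n < - int (length w) \<Longrightarrow> phi_poly w m n = 0"
    and nil: "\<And>m n. phi_poly [] m n = (if m = 0 \<and> n = 0 then 1 else 0)"
    and mult: "\<And>u v m n. is_basis u \<Longrightarrow> is_basis v \<Longrightarrow>
       (\<Sum>i\<in>{- int (length u)..n + int (length v)}. \<Sum>p\<in>spl m. phi_poly u (fst p) i * phi_poly v (snd p) (n - i))
       = (\<Sum>w\<leftarrow>qsh u v. phi_poly w m n)"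
begin

lemma Phi_nth: "is_basis w \<Longrightarrow> Phi w $$ n = Abs_mps (\<lambda>m. phi_poly w m n)"
  unfolding Phi_def
proof (rule nth_Abs_fls)
  assume b: "is_basis w"
  show "\<forall>\<^sub>\<infinity>n. Abs_mps (\<lambda>m. phi_poly w m (- int n)) = 0"
    unfolding MOST_nat
  proof (intro exI allI impI)
    fix n assume "length w < n"
    then have "\<And>m. phi_poly w m (- int n) = 0" using bound[OF b] by simp
    then show "Abs_mps (\<lambda>m. phi_poly w m (- int n)) = 0"
      by (simp add: zero_mps_def)
  qed
qed

lemma mpc_Phi_nth: "is_basis w \<Longrightarrow> mpc (Phi w $$ n) m = phi_poly w m n"
  by (simp add: Phi_nth Abs_mps_inverse)

lemma phi_emb: "is_basis w \<Longrightarrow> phi w = emb (Phi w)"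
  by (simp add: fun_eq_iff phi_def emb_def mpc_Phi_nth)

lemma Phi_nil: "Phi [] = 1"
  by (rule fls_eqI, rule mps_eqI) (simp add: mpc_Phi_nth is_basis_def nil one_mps.rep_eq zero_mps.rep_eq)

lemma Phi_mult: "is_basis u \<Longrightarrow> is_basis v \<Longrightarrow> Phi u * Phi v = QS Phi u v"
proof (rule fls_eqI, rule mps_eqI)
  fix n m assume bu: "is_basis u" and bv: "is_basis v"
  have "(Phi u * Phi v) $$ n = (\<Sum>i\<in>{- int (length u)..n + int (length v)}. Phi u $$ i * Phi v $$ (n - i))"
    by (subst fls_mult_nth_bounds[where a = "- int (length u)" and b = "- int (length v)"])
       (auto intro!: mps_eqI simp: mpc_Phi_nth bu bv bound zero_mps.rep_eq)
  then have "mpc ((Phi u * Phi v) $$ n) m =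
     (\<Sum>i\<in>{- int (length u)..n + int (length v)}. \<Sum>p\<in>spl m. phi_poly u (fst p) i * phi_poly v (snd p) (n - i))"
    by (simp add: mpc_sum times_mps.rep_eq mpc_Phi_nth bu bv)
  also have "\<dots> = (\<Sum>w\<leftarrow>qsh u v. phi_poly w m n)" by (rule mult[OF bu bv])
  also have "\<dots> = mpc (QS Phi u v $$ n) m"
    using is_basis_qsh[OF bu bv]
    by (simp add: fls_nth_sum_list mpc_sum_list' mpc_Phi_nth cong: map_cong)
  finally show "mpc ((Phi u * Phi v) $$ n) m = mpc (QS Phi u v $$ n) m" .
qed

lemma renorm_emb:
  assumes b: "is_basis u" and ih: "\<forall>i\<in>{1..<length u}. phi_minus (drop i u) = emb (phm Phi (drop i u))"
  shows "(\<lambda>n m a. phi u n m a + (\<Sum>i\<in>{1..<length u}. lser_mul (phi (take i u)) (phi_minus (drop i u)) n m a))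
     = emb (phbar Phi u)"
proof (intro ext)
  fix n m a
  have "(\<Sum>i\<in>{1..<length u}. lser_mul (phi (take i u)) (phi_minus (drop i u)) n m a)
      = (\<Sum>i\<in>{1..<length u}. emb (Phi (take i u) * phm Phi (drop i u)) n m a)"
  proof (rule sum.cong[OF refl])
    fix i assume i: "i \<in> {1..<length u}"
    have "phi_minus (drop i u) = emb (phm Phi (drop i u))" using ih i by blast
    then show "lser_mul (phi (take i u)) (phi_minus (drop i u)) n m a = emb (Phi (take i u) * phm Phi (drop i u)) n m a"
      by (simp add: phi_emb[OF is_basis_take[OF b]] lser_mul_emb)
  qed
  then show "phi u n m a + (\<Sum>i\<in>{1..<length u}. lser_mul (phi (take i u)) (phi_minus (drop i u)) n m a)
      = emb (phbar Phi u) n m a"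
    by (simp add: phbar_def emb_add emb_sum phi_emb[OF b])
qed

lemma phi_minus_emb: "is_basis u \<Longrightarrow> phi_minus u = emb (phm Phi u)"
proof (induction "length u" arbitrary: u rule: less_induct)
  case less
  show ?case
  proof (cases u)
    case Nil then show ?thesis by (simp add: emb_one)
  next
    case (Cons c w)
    have ih: "\<forall>i\<in>{1..<length u}. phi_minus (drop i u) = emb (phm Phi (drop i u))"
      using less Cons by (auto intro!: less.hyps is_basis_drop)
    have S: "(\<lambda>n m a. phi u n m a + (\<Sum>i\<in>{1..<length u}. lser_mul (phi (take i u)) (phi_minus (drop i u)) n m a))
        = emb (phbar Phi u)"
      by (rule renorm_emb[OF less.prems ih])
    show ?thesis
      using S Cons by (simp add: Let_def fun_eq_iff emb_uminus emb_polf[symmetric] phbar_def)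
  qed
qed

lemma phi_plus_emb: "is_basis u \<Longrightarrow> phi_plus u = emb (php Phi u)"
proof (cases "u = []")
  case True then show ?thesis by (simp add: phi_plus_def php_def emb_one)
next
  case False
  assume b: "is_basis u"
  have ih: "\<forall>i\<in>{1..<length u}. phi_minus (drop i u) = emb (phm Phi (drop i u))"
    using b by (auto intro!: phi_minus_emb is_basis_drop)
  have S: "renorm_sum u = emb (phbar Phi u)"
    unfolding renorm_sum_def by (rule renorm_emb[OF b ih])
  show ?thesis using False
    by (auto simp: phi_plus_def php_def S fun_eq_iff emb_add phm_ne emb_uminus emb_def zero_mps.rep_eq)
qed

theorem main:
  assumes bu: "is_basis u" and bv: "is_basis v"
  shows "xt_mul (Zq u) (Zq v) = Zsum (qsh u v)"
proof -
  have B: "php Phi u * php Phi v = QS (php Phi) u v"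
    using birkhoff[where F = Phi and B = is_basis, OF Phi_nil Phi_mult is_basis_take is_basis_drop bu bv]
    by blast
  have r: "\<And>w i. i < 0 \<Longrightarrow> php Phi w $$ i = 0"
    using isreg_php unfolding isreg_def by blast
  have "(php Phi u * php Phi v) $$ 0 = php Phi u $$ 0 * php Phi v $$ 0"
    by (subst fls_mult_nth_bounds[where a = 0 and b = 0]) (auto simp: r)
  then have "xt_mul (Zq u) (Zq v) = (\<lambda>m a. coeff (mpc ((php Phi u * php Phi v) $$ 0) m) a)"
    by (simp add: Zq_def phi_plus_emb bu bv emb_def[abs_def] xt_mul_emb)
  also have "\<dots> = Zsum (qsh u v)"
    unfolding B using is_basis_qsh[OF bu bv]
    by (simp add: fun_eq_iff Zsum_def Zq_def phi_plus_emb emb_def fls_nth_sum_list mpc_sum_list'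
        coeff_sum_list cong: map_cong)
  finally show ?thesis .
qed

end


section \<open>Left Laurent expansions\<close>

definition LS :: "complex set" where "LS = {z. Re z < 0}"

lemma eventually_LS: "eventually (\<lambda>z. Re z < 0) (at 0 within LS)"
  unfolding LS_def eventually_at_filter by simp

lemma at_LS_nontriv: "at (0::complex) within LS \<noteq> bot"
proof -
  have "(0::complex) islimpt LS"
    unfolding islimpt_approachable
  proof (intro allI impI)
    fix e :: real assume e: "0 < e"
    show "\<exists>x'\<in>LS. x' \<noteq> 0 \<and> dist x' 0 < e"
      by (rule bexI[of _ "complex_of_real (- e / 2)"]) (use e in \<open>auto simp: LS_def dist_norm\<close>)
  qed
  then show ?thesis by (simp add: trivial_limit_within)
qed

lemma hlel_iff: "has_laurent_expansion_left f F \<longleftrightarrow>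
   fls_conv_radius F > 0 \<and> eventually (\<lambda>z. eval_fls F z = f z) (at 0 within LS)"
  by (simp add: has_laurent_expansion_left_def LS_def)

lemma hle_imp_hlel: "f has_laurent_expansion F \<Longrightarrow> has_laurent_expansion_left f F"
  unfolding hlel_iff has_laurent_expansion_def
  using filter_leD[OF at_le[OF subset_UNIV]] by blast

lemma hlel_cong:
  assumes "has_laurent_expansion_left f F" "\<And>z. Re z < 0 \<Longrightarrow> f z = g z"
  shows "has_laurent_expansion_left g F"
proof -
  have "eventually (\<lambda>z. eval_fls F z = f z) (at 0 within LS)" "fls_conv_radius F > 0"
    using assms(1) by (auto simp: hlel_iff)
  moreover note eventually_LS
  ultimately show ?thesis unfolding hlel_iff
    by (auto elim: eventually_elim2 simp: assms(2))
qed

lemma eventually_radius: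
  assumes "0 < r"
  shows "eventually (\<lambda>z. ereal (norm z) < r \<and> z \<noteq> 0) (at (0::complex) within LS)"
proof -
  have "eventually (\<lambda>z. z \<in> eball 0 r - {0}) (at (0::complex))"
    using assms by (intro eventually_at_in_open) (auto simp: zero_ereal_def)
  then have "eventually (\<lambda>z. z \<in> eball 0 r - {0}) (at (0::complex) within LS)"
    using filter_leD[OF at_le[OF subset_UNIV]] by blast
  then show ?thesis by eventually_elim auto
qed

lemma hlel_mult:
  assumes f: "has_laurent_expansion_left f F" and g: "has_laurent_expansion_left g G"
  shows "has_laurent_expansion_left (\<lambda>z. f z * g z) (F * G)"
proof -
  from f g have rF: "fls_conv_radius F > 0" and rG: "fls_conv_radius G > 0"
    and eF: "eventually (\<lambda>z. eval_fls F z = f z) (at 0 within LS)"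
    and eG: "eventually (\<lambda>z. eval_fls G z = g z) (at 0 within LS)"
    by (auto simp: hlel_iff)
  have r: "0 < min (fls_conv_radius F) (fls_conv_radius G)" using rF rG by simp
  have "fls_conv_radius (F * G) > 0"
    using fls_conv_radius_mult[of F G] r by (metis less_le_trans)
  moreover have "eventually (\<lambda>z. eval_fls (F * G) z = f z * g z) (at 0 within LS)"
    using eF eG eventually_radius[OF r]
    by eventually_elim (auto simp: eval_fls_mult)
  ultimately show ?thesis by (simp add: hlel_iff)
qed

lemma hlel_add:
  assumes f: "has_laurent_expansion_left f F" and g: "has_laurent_expansion_left g G"
  shows "has_laurent_expansion_left (\<lambda>z. f z + g z) (F + G)"
proof -
  from f g have rF: "fls_conv_radius F > 0" and rG: "fls_conv_radius G > 0"
    and eF: "eventually (\<lambda>z. eval_fls F z = f z) (at 0 within LS)"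
    and eG: "eventually (\<lambda>z. eval_fls G z = g z) (at 0 within LS)"
    by (auto simp: hlel_iff)
  have r: "0 < min (fls_conv_radius F) (fls_conv_radius G)" using rF rG by simp
  have "fls_conv_radius (F + G) > 0"
    using fls_conv_radius_add[of F G] r by (metis less_le_trans)
  moreover have "eventually (\<lambda>z. eval_fls (F + G) z = f z + g z) (at 0 within LS)"
    using eF eG eventually_radius[OF r]
    by eventually_elim (auto simp: eval_fls_add)
  ultimately show ?thesis by (simp add: hlel_iff)
qed

lemma hlel_0: "has_laurent_expansion_left (\<lambda>_. 0) 0"
  by (rule hle_imp_hlel) simp

lemma hlel_sum:
  assumes "\<And>a. a \<in> A \<Longrightarrow> has_laurent_expansion_left (f a) (F a)"
  shows "has_laurent_expansion_left (\<lambda>z. \<Sum>a\<in>A. f a z) (\<Sum>a\<in>A. F a)"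
  using assms
proof (induction A rule: infinite_finite_induct)
  case (infinite A) then show ?case by (simp add: hlel_0)
next
  case empty then show ?case by (simp add: hlel_0)
next
  case (insert x A) then show ?case by (simp add: hlel_add)
qed

lemma hlel_sum_list:
  assumes "\<And>a. a \<in> set xs \<Longrightarrow> has_laurent_expansion_left (f a) (F a)"
  shows "has_laurent_expansion_left (\<lambda>z. \<Sum>a\<leftarrow>xs. f a z) (\<Sum>a\<leftarrow>xs. F a)"
  using assms by (induction xs) (auto simp: hlel_0 intro!: hlel_add)

lemma hlel_unique:
  assumes f: "has_laurent_expansion_left f F" and g: "has_laurent_expansion_left f G"
  shows "F = G"
proof (rule ccontr)
  assume ne: "F \<noteq> G"
  from f g have rF: "fls_conv_radius F > 0" and rG: "fls_conv_radius G > 0"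
    and eF: "eventually (\<lambda>z. eval_fls F z = f z) (at 0 within LS)"
    and eG: "eventually (\<lambda>z. eval_fls G z = f z) (at 0 within LS)"
    by (auto simp: hlel_iff)
  have r: "0 < min (fls_conv_radius F) (fls_conv_radius G)" using rF rG by simp
  have rH: "fls_conv_radius (F - G) > 0"
    using fls_conv_radius_diff[of F G] r by (metis less_le_trans)
  have "eval_fls (F - G) has_laurent_expansion (F - G)"
    by (rule eval_fls_has_laurent_expansion[OF rH])
  then have "eventually (\<lambda>z. eval_fls (F - G) z \<noteq> 0) (at 0)"
    using ne by (subst has_laurent_expansion_eventually_nonzero_iff') auto
  then have e1: "eventually (\<lambda>z. eval_fls (F - G) z \<noteq> 0) (at 0 within LS)"
    using filter_leD[OF at_le[OF subset_UNIV]] by blast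
  have "eventually (\<lambda>z. False) (at 0 within LS)"
    using e1 eF eG eventually_radius[OF r]
    by eventually_elim (auto simp: eval_fls_diff)
  then show False using at_LS_nontriv by (simp add: trivial_limit_def)
qed

lemma laurent_coeff_eq:
  "has_laurent_expansion_left f F \<Longrightarrow> laurent_coeff f n = F $$ n"
  unfolding laurent_coeff_def
  by (rule arg_cong[where f = "\<lambda>F. F $$ n"], rule the_equality) (auto intro: hlel_unique)

section \<open>Rational Laurent series\<close>

definition mapQ :: "rat fls \<Rightarrow> complex fls" where
  "mapQ Q = Abs_fls (\<lambda>n. of_rat (Q $$ n))"

lemma mapQ_nth [simp]: "mapQ Q $$ n = of_rat (Q $$ n)"
  unfolding mapQ_def
  by (rule nth_Abs_fls, rule MOST_mono[OF MOST_fls_neg_nth_eq_0]) simp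

lemma fls_mult_nth_bounds':
  fixes F G :: "'a::comm_ring_1 fls"
  assumes F: "\<And>i. i < a \<Longrightarrow> F $$ i = 0" and G: "\<And>i. i < b \<Longrightarrow> G $$ i = 0"
  shows "(F * G) $$ n = (\<Sum>i\<in>{a..n-b}. F $$ i * G $$ (n - i))"
proof (cases "F = 0 \<or> G = 0")
  case True then show ?thesis by auto
next
  case False
  then have dF: "a \<le> fls_subdegree F" and dG: "b \<le> fls_subdegree G"
    using F G by (auto intro!: fls_subdegree_geI)
  have "(F * G) $$ n = (\<Sum>i=fls_subdegree F..n - fls_subdegree G. F $$ i * G $$ (n - i))"
    by (rule fls_times_nth(2))
  also have "\<dots> = (\<Sum>i\<in>{a..n-b}. F $$ i * G $$ (n - i))"
  proof (rule sum.mono_neutral_left)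
    show "finite {a..n-b}" by simp
    show "{fls_subdegree F..n - fls_subdegree G} \<subseteq> {a..n-b}" using dF dG by auto
    show "\<forall>i\<in>{a..n - b} - {fls_subdegree F..n - fls_subdegree G}. F $$ i * G $$ (n - i) = 0"
      by auto
  qed
  finally show ?thesis .
qed

lemma mapQ_mult: "mapQ (P * Q) = mapQ P * mapQ Q"
proof (rule fls_eqI)
  fix n
  have "mapQ (P * Q) $$ n = of_rat (\<Sum>i\<in>{fls_subdegree P..n - fls_subdegree Q}. P $$ i * Q $$ (n - i))"
    by (simp add: fls_mult_nth_bounds'[where a = "fls_subdegree P" and b = "fls_subdegree Q"])
  also have "\<dots> = (mapQ P * mapQ Q) $$ n"
    by (simp add: fls_mult_nth_bounds'[where a = "fls_subdegree P" and b = "fls_subdegree Q"] of_rat_sum of_rat_mult)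
  finally show "mapQ (P * Q) $$ n = (mapQ P * mapQ Q) $$ n" .
qed

lemma mapQ_add: "mapQ (P + Q) = mapQ P + mapQ Q"
  by (rule fls_eqI) (simp add: of_rat_add)
lemma mapQ_diff: "mapQ (P - Q) = mapQ P - mapQ Q"
  by (rule fls_eqI) (simp add: of_rat_diff)
lemma mapQ_1: "mapQ 1 = 1"
  by (rule fls_eqI) simp
lemma mapQ_0: "mapQ 0 = 0"
  by (rule fls_eqI) simp
lemma mapQ_const: "mapQ (fls_const c) = fls_const (of_rat c)"
  by (rule fls_eqI) simp
lemma mapQ_sum: "mapQ (\<Sum>a\<in>A. Q a) = (\<Sum>a\<in>A. mapQ (Q a))"
  by (rule fls_eqI) (simp add: fls_nth_sum of_rat_sum)

lemma mapQ_inverse: "mapQ (inverse Q) = inverse (mapQ Q)"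
proof (cases "Q = 0")
  case True then show ?thesis by (simp add: mapQ_0)
next
  case False
  have "mapQ Q * mapQ (inverse Q) = 1"
    by (simp add: mapQ_mult[symmetric] False mapQ_1)
  then show ?thesis by (metis inverse_unique)
qed

definition goodL :: "(complex \<Rightarrow> complex) \<Rightarrow> nat \<Rightarrow> bool" where
  "goodL f N \<longleftrightarrow> (\<exists>Q. (\<forall>n< - int N. Q $$ n = 0) \<and> has_laurent_expansion_left f (mapQ Q))"

lemma goodL_cong: "goodL f N \<Longrightarrow> (\<And>z. Re z < 0 \<Longrightarrow> f z = g z) \<Longrightarrow> goodL g N"
  unfolding goodL_def using hlel_cong by blast

lemma goodL_mono: "goodL f N \<Longrightarrow> N \<le> M \<Longrightarrow> goodL f M"
  unfolding goodL_def by force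

lemma goodL_mult:
  assumes "goodL f N" "goodL g M"
  shows "goodL (\<lambda>z. f z * g z) (N + M)"
proof -
  obtain P where P: "\<forall>n< - int N. P $$ n = 0" "has_laurent_expansion_left f (mapQ P)"
    using assms(1) by (auto simp: goodL_def)
  obtain Q where Q: "\<forall>n< - int M. Q $$ n = 0" "has_laurent_expansion_left g (mapQ Q)"
    using assms(2) by (auto simp: goodL_def)
  have "\<forall>n< - int (N + M). (P * Q) $$ n = 0"
    by (auto simp: fls_mult_nth_bounds'[where a = "- int N" and b = "- int M"] P(1) Q(1))
  moreover have "has_laurent_expansion_left (\<lambda>z. f z * g z) (mapQ (P * Q))"
    unfolding mapQ_mult by (rule hlel_mult[OF P(2) Q(2)])
  ultimately show ?thesis unfolding goodL_def by blast
qed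

lemma goodL_add:
  assumes "goodL f N" "goodL g N"
  shows "goodL (\<lambda>z. f z + g z) N"
proof -
  obtain P where P: "\<forall>n< - int N. P $$ n = 0" "has_laurent_expansion_left f (mapQ P)"
    using assms(1) by (auto simp: goodL_def)
  obtain Q where Q: "\<forall>n< - int N. Q $$ n = 0" "has_laurent_expansion_left g (mapQ Q)"
    using assms(2) by (auto simp: goodL_def)
  have "\<forall>n< - int N. (P + Q) $$ n = 0" using P(1) Q(1) by simp
  moreover have "has_laurent_expansion_left (\<lambda>z. f z + g z) (mapQ (P + Q))"
    unfolding mapQ_add by (rule hlel_add[OF P(2) Q(2)])
  ultimately show ?thesis unfolding goodL_def by blast
qed

lemma goodL_0: "goodL (\<lambda>_. 0) N"
  unfolding goodL_def by (rule exI[of _ 0]) (simp add: mapQ_0 hlel_0)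

lemma goodL_sum:
  assumes "\<And>a. a \<in> A \<Longrightarrow> goodL (f a) N"
  shows "goodL (\<lambda>z. \<Sum>a\<in>A. f a z) N"
  using assms
proof (induction A rule: infinite_finite_induct)
  case (infinite A) then show ?case by (simp add: goodL_0)
next
  case empty then show ?case by (simp add: goodL_0)
next
  case (insert x A)
  then show ?case by (simp add: goodL_add)
qed

lemma goodL_const: "goodL (\<lambda>_. of_rat c) 0"
  unfolding goodL_def
  by (rule exI[of _ "fls_const c"]) (auto simp: mapQ_const intro!: hle_imp_hlel)

definition Qexp :: "nat \<Rightarrow> rat fls" where
  "Qexp c = fps_to_fls (Abs_fps (\<lambda>k. of_nat c ^ k / fact k))"

lemma of_rat_fact: "of_rat (fact k) = (fact k :: 'a::field_char_0)"
  by (metis of_nat_fact of_rat_of_nat_eq)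

lemma mapQ_Qexp: "mapQ (Qexp c) = fps_to_fls (fps_exp (of_nat c))"
  by (rule fls_eqI) (simp add: Qexp_def fps_exp_nth of_rat_divide of_rat_power of_rat_fact)

lemma hle_exp: "(\<lambda>z. exp (of_nat c * z)) has_laurent_expansion mapQ (Qexp c)"
  unfolding mapQ_Qexp by (intro has_laurent_expansion_fps has_fps_expansion_exp)

lemma goodL_exp: "goodL (\<lambda>z. exp (of_nat c * z)) 0"
  unfolding goodL_def
proof (rule exI[of _ "Qexp c"], intro conjI)
  show "\<forall>n< - int 0. Qexp c $$ n = 0" by (simp add: Qexp_def)
  show "has_laurent_expansion_left (\<lambda>z. exp (of_nat c * z)) (mapQ (Qexp c))"
    by (intro hle_imp_hlel hle_exp)
qed

lemma goodL_geo:
  assumes B: "0 < B"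
  shows "goodL (\<lambda>z. inverse (1 - exp (of_nat B * z))) 1"
proof -
  let ?E = "1 - Qexp B"
  have h: "(\<lambda>z. inverse (1 - exp (of_nat B * z))) has_laurent_expansion inverse (mapQ ?E)"
    unfolding mapQ_diff mapQ_1 by (intro laurent_expansion_intros hle_exp)
  have n1: "?E $$ 1 \<noteq> 0" using B by (simp add: Qexp_def)
  then have ne: "?E \<noteq> 0" by auto
  have "fls_subdegree ?E \<le> 1" using n1 by (rule fls_subdegree_leI)
  then have "- 1 \<le> fls_subdegree (inverse ?E)" by simp
  then have "\<forall>n < - int 1. inverse ?E $$ n = 0" by simp
  moreover have "has_laurent_expansion_left (\<lambda>z. inverse (1 - exp (of_nat B * z))) (mapQ (inverse ?E))"
    unfolding mapQ_inverse by (rule hle_imp_hlel[OF h])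
  ultimately show ?thesis unfolding goodL_def by blast
qed


definition wt :: "word \<Rightarrow> nat list \<Rightarrow> complex \<Rightarrow> complex" where
  "wt w is z = (\<Prod>j<length w. exp (of_nat (is ! j) * of_nat (snd (w ! j)) * z))"

definition tup :: "word \<Rightarrow> mono \<Rightarrow> nat \<Rightarrow> nat list set" where
  "tup w m a = {is. length is = length w \<and> sorted_wrt (<) is \<and> (\<forall>i\<in>set is. a < i) \<and> tuple_mono w is = m}"

definition S :: "word \<Rightarrow> mono \<Rightarrow> nat \<Rightarrow> complex \<Rightarrow> complex" where
  "S w m a z = (\<Sum>\<^sub>\<infinity>is\<in>tup w m a. wt w is z)"

lemma tuple_mono_Nil [simp]: "tuple_mono [] is = 0"
  by (simp add: tuple_mono_def)

lemma tuple_mono_Cons: "tuple_mono (c # w) (i # is) = Poly_Mapping.single i (fst c) + tuple_mono w is"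
  unfolding tuple_mono_def by (simp only: length_Cons sum.lessThan_Suc_shift) simp

lemma wt_Nil [simp]: "wt [] is z = 1"
  by (simp add: wt_def)

lemma wt_Cons: "wt (c # w) (i # is) z = exp (of_nat i * of_nat (snd c) * z) * wt w is z"
  unfolding wt_def by (simp only: length_Cons prod.lessThan_Suc_shift) simp

lemma tup_Nil: "tup [] m a = (if m = 0 then {[]} else {})"
  by (auto simp: tup_def)

lemma lk_single: "lk (Poly_Mapping.single i v) k = (if i = k then v else 0)"
  by (simp add: lookup_single when_def)

lemma tup_Cons: "tup (c # w) m a = (\<lambda>(i, is). i # is) `
   (SIGMA i:{i. a < i \<and> fst c \<le> lk m i}. tup w (m - Poly_Mapping.single i (fst c)) i)"
proof (rule set_eqI)
  fix x
  show "x \<in> tup (c # w) m a \<longleftrightarrow> x \<in> (\<lambda>(i, is). i # is) `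
   (SIGMA i:{i. a < i \<and> fst c \<le> lk m i}. tup w (m - Poly_Mapping.single i (fst c)) i)"
  proof
    assume x: "x \<in> tup (c # w) m a"
    then obtain i js where xi: "x = i # js" by (cases x) (auto simp: tup_def)
    have tm: "Poly_Mapping.single i (fst c) + tuple_mono w js = m"
      using x xi by (simp add: tup_def tuple_mono_Cons)
    then have le: "fst c \<le> lk m i"
      by (metis le_add1 lookup_add lookup_single_eq)
    have "tuple_mono w js = m - Poly_Mapping.single i (fst c)"
      using tm by (metis add_diff_cancel_left')
    then have "js \<in> tup w (m - Poly_Mapping.single i (fst c)) i" "a < i"
      using x xi by (auto simp: tup_def)
    then show "x \<in> (\<lambda>(i, is). i # is) `
      (SIGMA i:{i. a < i \<and> fst c \<le> lk m i}. tup w (m - Poly_Mapping.single i (fst c)) i)"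
      using xi le by force
  next
    assume "x \<in> (\<lambda>(i, is). i # is) `
      (SIGMA i:{i. a < i \<and> fst c \<le> lk m i}. tup w (m - Poly_Mapping.single i (fst c)) i)"
    then obtain i js where xi: "x = i # js" and ai: "a < i" and le: "fst c \<le> lk m i"
      and js: "js \<in> tup w (m - Poly_Mapping.single i (fst c)) i" by auto
    have "Poly_Mapping.single i (fst c) + (m - Poly_Mapping.single i (fst c)) = m"
      by (rule poly_mapping_eqI) (use le in \<open>auto simp: lookup_add lookup_minus lk_single\<close>)
    then show "x \<in> tup (c # w) m a"
      using js xi ai by (auto simp: tup_def tuple_mono_Cons)
  qed
qed

lemma inj_cons: "inj_on (\<lambda>(i::nat, is). i # is) X"
  by (auto simp: inj_on_def)

lemma norm_exp_le:
  assumes z: "Re z < 0" and b: "0 < \<beta>"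
  shows "norm (exp (of_nat i * of_nat \<beta> * z)) \<le> exp (Re z) ^ i"
proof -
  have "norm (exp (of_nat i * of_nat \<beta> * z)) = exp (real i * real \<beta> * Re z)"
    by (simp add: norm_exp_eq_Re)
  also have "\<dots> \<le> exp (real i * Re z)"
  proof -
    have "real i * Re z * real \<beta> \<le> real i * Re z * 1"
      using z b by (intro mult_left_mono_neg) (auto simp: mult_nonneg_nonpos)
    then show ?thesis by (simp add: mult_ac)
  qed
  also have "\<dots> = exp (Re z) ^ i" by (simp add: exp_of_nat_mult)
  finally show ?thesis .
qed

lemma geo_has_sum:
  fixes q :: "'a::{real_normed_field,banach}"
  assumes "norm q < 1"
  shows "((\<lambda>i. q ^ i) has_sum (1 / (1 - q))) UNIV"
  by (rule norm_summable_imp_has_sum) (use assms in \<open>auto intro: geometric_sums summable_geometric simp: norm_power\<close>)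

lemma tup_summ:
  assumes z: "Re z < 0"
  shows "is_basis w \<Longrightarrow> (\<lambda>is. norm (wt w is z)) summable_on tup w m a \<and>
     (\<Sum>\<^sub>\<infinity>is\<in>tup w m a. norm (wt w is z)) \<le> (1 / (1 - exp (Re z))) ^ length w"
proof (induction w arbitrary: m a)
  case Nil
  show ?case by (auto simp: tup_Nil)
next
  case (Cons c w)
  define q where "q = exp (Re z)"
  have q0: "0 < q" and q1: "q < 1" using z by (auto simp: q_def)
  define K where "K = (1 / (1 - q)) ^ length w"
  have K0: "0 \<le> K" using q1 by (simp add: K_def)
  have bw: "is_basis w" and bc: "0 < snd c" using Cons.prems by (auto simp: is_basis_def)
  define A where "A = {i. a < i \<and> fst c \<le> lk m i}"
  define Bf where "Bf = (\<lambda>i. tup w (m - Poly_Mapping.single i (fst c)) i)"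
  define f where "f = (\<lambda>(i, is). norm (exp (of_nat i * of_nat (snd c) * z)) * norm (wt w is z))"
  define g where "g i = norm (exp (of_nat i * of_nat (snd c) * z)) * (\<Sum>\<^sub>\<infinity>is\<in>Bf i. norm (wt w is z))" for i
  have IH: "(\<lambda>is. norm (wt w is z)) summable_on Bf i" "(\<Sum>\<^sub>\<infinity>is\<in>Bf i. norm (wt w is z)) \<le> K" for i
    using Cons.IH[OF bw] by (auto simp: Bf_def K_def q_def)
  have fib: "((\<lambda>is. f (i, is)) has_sum g i) (Bf i)" for i
    using has_sum_cmult_right[OF has_sum_infsum[OF IH(1)], of "norm (exp (of_nat i * of_nat (snd c) * z))"]
    by (simp add: f_def g_def)
  have geo: "((\<lambda>i. q ^ i) has_sum (1 / (1 - q))) UNIV"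
    using geo_has_sum[of q] q0 q1 by simp
  have geoK: "((\<lambda>i. q ^ i * K) has_sum (1 / (1 - q) * K)) UNIV"
    using has_sum_cmult_left[OF geo] by simp
  have gle: "g i \<le> q ^ i * K" for i
  proof -
    have "g i \<le> norm (exp (of_nat i * of_nat (snd c) * z)) * K"
      unfolding g_def by (intro mult_left_mono IH(2)) auto
    also have "\<dots> \<le> q ^ i * K"
      unfolding q_def by (intro mult_right_mono norm_exp_le z bc K0)
    finally show ?thesis .
  qed
  have g0: "0 \<le> g i" for i unfolding g_def by (intro mult_nonneg_nonneg infsum_nonneg) auto
  have gs: "g summable_on A"
  proof -
    have "(\<lambda>i. q ^ i * K) summable_on A"
      using geoK summable_on_subset_banach[of _ UNIV A] by (auto simp: summable_on_def)
    then have "(\<lambda>i. norm (g i)) summable_on A"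
      by (rule Infinite_Sum.abs_summable_on_comparison_test') (use gle g0 in auto)
    then show ?thesis using g0 by simp
  qed
  have fS: "f summable_on Sigma A Bf"
    by (rule summable_on_SigmaI[OF fib gs]) (auto simp: f_def)
  have comp: "(\<lambda>is'. norm (wt (c # w) is' z)) \<circ> (\<lambda>(i, is). i # is) = f"
    by (auto simp: fun_eq_iff f_def wt_Cons norm_mult)
  have T: "tup (c # w) m a = (\<lambda>(i, is). i # is) ` Sigma A Bf"
    by (simp add: tup_Cons A_def Bf_def)
  have s1: "(\<lambda>is. norm (wt (c # w) is z)) summable_on tup (c # w) m a"
    unfolding T by (subst summable_on_reindex[OF inj_cons]) (simp add: comp fS)
  have "(\<Sum>\<^sub>\<infinity>is\<in>tup (c # w) m a. norm (wt (c # w) is z)) = infsum f (Sigma A Bf)"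
    unfolding T by (subst infsum_reindex[OF inj_cons]) (simp add: comp)
  also have "\<dots> = infsum g A"
  proof -
    have "(g has_sum infsum f (Sigma A Bf)) A"
      by (rule has_sum_SigmaD[OF has_sum_infsum[OF fS]]) (rule fib)
    then show ?thesis by (simp add: infsumI)
  qed
  also have "\<dots> \<le> infsum (\<lambda>i. q ^ i * K) UNIV"
  proof (rule infsum_mono_neutral[OF gs has_sum_imp_summable[OF geoK]])
    show "\<And>x. x \<in> A \<inter> UNIV \<Longrightarrow> g x \<le> q ^ x * K" using gle by blast
    show "\<And>x. x \<in> A - UNIV \<Longrightarrow> g x \<le> 0" by blast
    show "\<And>x. x \<in> UNIV - A \<Longrightarrow> 0 \<le> q ^ x * K" using q0 K0 by simp
  qed
  also have "\<dots> = (1 / (1 - q)) ^ length (c # w)"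
    using geoK by (simp add: infsumI K_def)
  finally show ?case using s1 by (simp add: q_def)
qed

lemma wt_summable:
  assumes "Re z < 0" "is_basis w" shows "(\<lambda>is. wt w is z) summable_on tup w m a"
proof -
  have "(\<lambda>is. norm (wt w is z)) summable_on tup w m a" using tup_summ[OF assms(1) assms(2)] by blast
  then show ?thesis by (rule abs_summable_summable)
qed

lemma S_Nil: "S [] m a z = (if m = 0 then 1 else 0)"
  by (simp add: S_def tup_Nil)

lemma S_Cons:
  assumes z: "Re z < 0" and b: "is_basis (c # w)"
  shows "S (c # w) m a z = (\<Sum>\<^sub>\<infinity>i\<in>{i. a < i \<and> fst c \<le> lk m i}.
            exp (of_nat i * of_nat (snd c) * z) * S w (m - Poly_Mapping.single i (fst c)) i z)"
    and "(\<lambda>i. exp (of_nat i * of_nat (snd c) * z) * S w (m - Poly_Mapping.single i (fst c)) i z)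
           summable_on {i. a < i \<and> fst c \<le> lk m i}"
proof -
  define A where "A = {i. a < i \<and> fst c \<le> lk m i}"
  define Bf where "Bf = (\<lambda>i. tup w (m - Poly_Mapping.single i (fst c)) i)"
  define f where "f = (\<lambda>i is. exp (of_nat i * of_nat (snd c) * z) * wt w is z)"
  have T: "tup (c # w) m a = (\<lambda>(i, is). i # is) ` Sigma A Bf"
    by (simp add: tup_Cons A_def Bf_def)
  have comp: "(\<lambda>is'. wt (c # w) is' z) \<circ> (\<lambda>(i, is). i # is) = (\<lambda>(i, is). f i is)"
    by (auto simp: fun_eq_iff f_def wt_Cons)
  have s: "(\<lambda>(i, is). f i is) summable_on Sigma A Bf"
    using wt_summable[OF z b, of m a] unfolding T
    by (subst (asm) summable_on_reindex[OF inj_cons]) (simp add: comp)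
  have e: "(\<Sum>\<^sub>\<infinity>is\<in>Bf i. f i is) = exp (of_nat i * of_nat (snd c) * z) * S w (m - Poly_Mapping.single i (fst c)) i z" for i
    by (simp add: f_def S_def Bf_def infsum_cmult_right')
  have "S (c # w) m a z = infsum (\<lambda>(i, is). f i is) (Sigma A Bf)"
    unfolding S_def T by (subst infsum_reindex[OF inj_cons]) (simp add: comp)
  also have "\<dots> = (\<Sum>\<^sub>\<infinity>i\<in>A. \<Sum>\<^sub>\<infinity>is\<in>Bf i. f i is)"
    using infsum_Sigma'_banach[OF s] by simp
  finally show "S (c # w) m a z = (\<Sum>\<^sub>\<infinity>i\<in>{i. a < i \<and> fst c \<le> lk m i}.
            exp (of_nat i * of_nat (snd c) * z) * S w (m - Poly_Mapping.single i (fst c)) i z)"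
    by (simp add: e A_def)
  show "(\<lambda>i. exp (of_nat i * of_nat (snd c) * z) * S w (m - Poly_Mapping.single i (fst c)) i z)
           summable_on {i. a < i \<and> fst c \<le> lk m i}"
    using summable_on_Sigma_banach[OF s] by (simp add: e A_def)
qed


definition allz :: "word \<Rightarrow> bool" where "allz w \<longleftrightarrow> (\<forall>c\<in>set w. fst c = 0)"
definition Bw :: "word \<Rightarrow> nat" where "Bw w = sum_list (map snd w)"

fun Cf :: "word \<Rightarrow> complex \<Rightarrow> complex" where
  "Cf [] z = 1"
| "Cf (c # w) z = Cf w z * exp (of_nat (Bw (c # w)) * z) * inverse (1 - exp (of_nat (Bw (c # w)) * z))"

lemma geo_tail:
  fixes r :: complex
  assumes "norm r < 1"
  shows "((\<lambda>i. r ^ i) has_sum (r ^ Suc a / (1 - r))) {a<..}"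
proof -
  have im: "{a<..} = (\<lambda>k. k + Suc a) ` UNIV"
  proof (intro set_eqI iffI)
    fix x assume "x \<in> {a<..}" then have "x = (x - Suc a) + Suc a" by simp
    then show "x \<in> range (\<lambda>k. k + Suc a)" by blast
  qed auto
  have inj: "inj_on (\<lambda>k. k + Suc a) UNIV" by (auto simp: inj_on_def)
  have "((\<lambda>k. r ^ k * r ^ Suc a) has_sum (1 / (1 - r) * r ^ Suc a)) UNIV"
    by (rule has_sum_cmult_left[OF geo_has_sum[OF assms]])
  then have "(((\<lambda>i. r ^ i) \<circ> (\<lambda>k. k + Suc a)) has_sum (r ^ Suc a / (1 - r))) UNIV"
    by (simp add: comp_def power_add mult_ac)
  then show ?thesis unfolding im by (subst has_sum_reindex[OF inj])
qed

lemma norm_exp_lt1: "Re z < 0 \<Longrightarrow> 0 < B \<Longrightarrow> norm (exp (of_nat B * z)) < 1"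
  by (simp add: mult_pos_neg)

lemma Bw_Cons [simp]: "Bw (c # w) = snd c + Bw w"
  by (simp add: Bw_def)

lemma Bw_pos: "is_basis w \<Longrightarrow> w \<noteq> [] \<Longrightarrow> 0 < Bw w"
  by (cases w) (auto simp: is_basis_def)

lemma S_zero:
  assumes z: "Re z < 0"
  shows "is_basis w \<Longrightarrow> allz w \<Longrightarrow> S w 0 a z = exp (of_nat a * of_nat (Bw w) * z) * Cf w z"
proof (induction w arbitrary: a)
  case Nil then show ?case by (simp add: S_Nil Bw_def)
next
  case (Cons c w)
  have bw: "is_basis w" and aw: "allz w" and c0: "fst c = 0" and bc: "0 < snd c"
    using Cons.prems by (auto simp: is_basis_def allz_def)
  define B where "B = Bw (c # w)"
  define r where "r = exp (of_nat B * z)"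
  have B0: "0 < B" using bc by (simp add: B_def)
  have r1: "norm r < 1" unfolding r_def using z B0 by (rule norm_exp_lt1)
  have set: "{i. a < i \<and> fst c \<le> lk 0 i} = {a<..}" using c0 by auto
  have e: "exp (of_nat i * of_nat (snd c) * z) * S w (0 - Poly_Mapping.single i (fst c)) i z = Cf w z * r ^ i" for i
  proof -
    have "S w (0 - Poly_Mapping.single i (fst c)) i z = exp (of_nat i * of_nat (Bw w) * z) * Cf w z"
      using Cons.IH[OF bw aw] c0 by simp
    moreover have "exp (of_nat i * of_nat (snd c) * z) * exp (of_nat i * of_nat (Bw w) * z) = r ^ i"
      unfolding r_def B_def by (simp add: exp_add[symmetric] exp_of_nat_mult[symmetric] algebra_simps)
    ultimately show ?thesis by (simp add: algebra_simps)
  qed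
  have "S (c # w) 0 a z = (\<Sum>\<^sub>\<infinity>i\<in>{i. a < i \<and> fst c \<le> lk 0 i}.
            exp (of_nat i * of_nat (snd c) * z) * S w (0 - Poly_Mapping.single i (fst c)) i z)"
    by (rule S_Cons(1)[OF z Cons.prems(1)])
  also have "\<dots> = (\<Sum>\<^sub>\<infinity>i\<in>{a<..}. Cf w z * r ^ i)"
    by (simp only: set e)
  also have "\<dots> = Cf w z * (r ^ Suc a / (1 - r))"
    by (rule infsumI, rule has_sum_cmult_right, rule geo_tail[OF r1])
  also have "\<dots> = exp (of_nat a * of_nat (Bw (c # w)) * z) * Cf (c # w) z"
    by (simp add: r_def B_def exp_of_nat_mult[symmetric] divide_inverse algebra_simps
        flip: of_nat_add exp_add)
  finally show ?case .
qed

lemma lk_tuple_mono: "lk (tuple_mono w js) k = (\<Sum>j<length w. if js ! j = k then fst (w ! j) else 0)"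
  by (simp add: tuple_mono_def lookup_sum lk_single)

lemma tup_empty:
  assumes keys: "\<forall>k\<in>Poly_Mapping.keys m. k \<le> a" and nz: "\<not> (m = 0 \<and> allz w)"
  shows "tup w m a = {}"
proof (rule ccontr)
  assume "tup w m a \<noteq> {}"
  then obtain js where js: "js \<in> tup w m a" by blast
  then have len: "length js = length w" and gt: "\<forall>i\<in>set js. a < i" and tm: "tuple_mono w js = m"
    by (auto simp: tup_def)
  show False
  proof (cases "m = 0")
    case False
    then obtain k where k: "lk m k \<noteq> 0"
      by (metis lookup_zero poly_mapping_eqI)
    then have "k \<le> a" using keys by (simp add: in_keys_iff)
    have "lk (tuple_mono w js) k = 0"
      unfolding lk_tuple_mono
    proof (rule sum.neutral, rule ballI)
      fix j assume "j \<in> {..<length w}"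
      then have "js ! j \<in> set js" using len by simp
      then show "(if js ! j = k then fst (w ! j) else 0) = 0" using gt \<open>k \<le> a\<close> by auto
    qed
    then show False using k tm by simp
  next
    case True
    then obtain c where c: "c \<in> set w" "fst c \<noteq> 0" using nz by (auto simp: allz_def)
    then obtain j where j: "j < length w" "w ! j = c" by (auto simp: in_set_conv_nth)
    have "fst (w ! j) \<le> lk (tuple_mono w js) (js ! j)"
      unfolding lk_tuple_mono
      using j(1) member_le_sum[of j "{..<length w}" "\<lambda>j'. if js ! j' = js ! j then fst (w ! j') else 0"]
      by simp
    then show False using True tm c j by simp
  qed
qed

lemma goodL_expm: "goodL (\<lambda>z. exp (of_nat i * of_nat b * z)) 0"
  using goodL_exp[of "i * b"] by simp

lemma goodL_Cf: "is_basis w \<Longrightarrow> goodL (Cf w) (length w)"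
proof (induction w)
  case Nil then show ?case using goodL_const[of 1] by simp
next
  case (Cons c w)
  have bw: "is_basis w" and bc: "0 < snd c" using Cons.prems by (auto simp: is_basis_def)
  have "goodL (\<lambda>z. Cf w z * exp (of_nat (Bw (c # w)) * z) * inverse (1 - exp (of_nat (Bw (c # w)) * z)))
          (length w + 0 + 1)"
    by (intro goodL_mult Cons.IH bw goodL_exp goodL_geo) (use bc in simp)
  then show ?case by simp
qed

lemma goodL_S: "is_basis w \<Longrightarrow> goodL (S w m a) (length w)"
proof (induction w arbitrary: m a)
  case Nil
  have g: "goodL (\<lambda>_. of_rat (if m = 0 then 1 else 0)) 0" by (rule goodL_const)
  have "goodL (S [] m a) 0" by (rule goodL_cong[OF g]) (simp add: S_Nil)
  then show ?case by simp
next
  case (Cons c w)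
  have bw: "is_basis w" and bc: "0 < snd c" using Cons.prems by (auto simp: is_basis_def)
  define A where "A = {i. a < i \<and> fst c \<le> lk m i}"
  define h where "h = (\<lambda>i z. exp (of_nat i * of_nat (snd c) * z) * S w (m - Poly_Mapping.single i (fst c)) i z)"
  have Seq: "S (c # w) m a z = (\<Sum>\<^sub>\<infinity>i\<in>A. h i z)" if "Re z < 0" for z
    using S_Cons(1)[OF that Cons.prems] by (simp add: A_def h_def)
  have hs: "(\<lambda>i. h i z) summable_on A" if "Re z < 0" for z
    using S_Cons(2)[OF that Cons.prems] by (simp add: A_def h_def)
  have gh: "goodL (h i) (length w)" for i
    unfolding h_def using goodL_mult[OF goodL_expm Cons.IH[OF bw]] by simp
  show ?case
  proof (cases "0 < fst c")
    case True
    have fin: "finite A"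
    proof (rule finite_subset)
      show "A \<subseteq> Poly_Mapping.keys m" using True by (auto simp: A_def in_keys_iff)
    qed simp
    have "goodL (\<lambda>z. \<Sum>i\<in>A. h i z) (length w)"
      by (rule goodL_sum) (rule gh)
    then have "goodL (\<lambda>z. \<Sum>i\<in>A. h i z) (length (c # w))"
      by (rule goodL_mono) simp
    then show ?thesis
      by (rule goodL_cong) (simp add: Seq fin)
  next
    case False
    then have c0: "fst c = 0" by simp
    define M where "M = Max (insert a (Poly_Mapping.keys m))"
    have aM: "a \<le> M" by (simp add: M_def)
    have kM: "\<forall>k\<in>Poly_Mapping.keys m. k \<le> M" by (simp add: M_def)
    have A: "A = {a<..M} \<union> {M<..}" using aM c0 by (auto simp: A_def)
    have hi: "h i z = exp (of_nat i * of_nat (snd c) * z) * S w m i z" for i z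
      using c0 by (simp add: h_def)
    have split: "S (c # w) m a z = (\<Sum>i\<in>{a<..M}. h i z) + (\<Sum>\<^sub>\<infinity>i\<in>{M<..}. h i z)" if z: "Re z < 0" for z
    proof -
      have "S (c # w) m a z = (\<Sum>\<^sub>\<infinity>i\<in>{a<..M} \<union> {M<..}. h i z)" using Seq[OF z] A by simp
      also have "\<dots> = (\<Sum>\<^sub>\<infinity>i\<in>{a<..M}. h i z) + (\<Sum>\<^sub>\<infinity>i\<in>{M<..}. h i z)"
        by (rule infsum_Un_disjoint) (use hs[OF z] A in \<open>auto intro: summable_on_subset_banach\<close>)
      finally show ?thesis by simp
    qed
    have g1: "goodL (\<lambda>z. \<Sum>i\<in>{a<..M}. h i z) (length (c # w))"
      by (rule goodL_mono[OF goodL_sum[OF gh]]) simp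
    have g2: "goodL (\<lambda>z. \<Sum>\<^sub>\<infinity>i\<in>{M<..}. h i z) (length (c # w))"
    proof (cases "m = 0 \<and> allz w")
      case True
      then have m0: "m = 0" and aw: "allz w" by auto
      define B where "B = Bw (c # w)"
      have B0: "0 < B" using bc by (simp add: B_def)
      have "goodL (\<lambda>z. Cf w z * exp (of_nat (Suc M * B) * z) * inverse (1 - exp (of_nat B * z)))
          (length w + 0 + 1)"
        by (intro goodL_mult goodL_Cf bw goodL_exp goodL_geo B0)
      then show ?thesis
      proof (rule goodL_cong[OF goodL_mono[where M = "length (c # w)"]])
        fix z :: complex assume z: "Re z < 0"
        define r where "r = exp (of_nat B * z)"
        have r1: "norm r < 1" unfolding r_def using z B0 by (rule norm_exp_lt1)
        have "h i z = Cf w z * r ^ i" for i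
        proof -
          have "h i z = exp (of_nat i * of_nat (snd c) * z) * (exp (of_nat i * of_nat (Bw w) * z) * Cf w z)"
            unfolding hi m0 using S_zero[OF z bw aw] by simp
          also have "\<dots> = Cf w z * r ^ i"
            unfolding r_def B_def by (simp add: exp_add[symmetric] exp_of_nat_mult[symmetric] algebra_simps)
          finally show ?thesis .
        qed
        then have "(\<Sum>\<^sub>\<infinity>i\<in>{M<..}. h i z) = Cf w z * (r ^ Suc M / (1 - r))"
          by (simp add: infsumI[OF has_sum_cmult_right[OF geo_tail[OF r1]]])
        also have "\<dots> = Cf w z * exp (of_nat (Suc M * B) * z) * inverse (1 - exp (of_nat B * z))"
        proof -
          have er: "exp (of_nat (Suc M * B) * z) = r ^ Suc M" unfolding r_def
            by (simp only: exp_of_nat_mult[symmetric] of_nat_mult mult.assoc)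
          show ?thesis unfolding er r_def[symmetric] by (simp add: divide_inverse)
        qed
        finally show "Cf w z * exp (of_nat (Suc M * B) * z) * inverse (1 - exp (of_nat B * z)) =
            (\<Sum>\<^sub>\<infinity>i\<in>{M<..}. h i z)" ..
      qed simp
    next
      case False
      have "h i z = 0" if "i \<in> {M<..}" for i z
      proof -
        have "\<forall>k\<in>Poly_Mapping.keys m. k \<le> i" using kM that by force
        then have "tup w m i = {}" using tup_empty False by blast
        then show ?thesis by (simp add: hi S_def)
      qed
      then have "(\<Sum>\<^sub>\<infinity>i\<in>{M<..}. h i z) = 0" for z by (intro infsum_0) blast
      then show ?thesis using goodL_0 by simp
    qed
    show ?thesis
      using goodL_add[OF g1 g2] by (rule goodL_cong) (simp add: split)
  qed
qed


lemma tuples_tup: "tuples w m = tup w m 0"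
  by (simp add: tuples_def tup_def)

lemma Bw_sum: "(\<Sum>j<length w. snd (w ! j)) = Bw w"
  by (simp add: Bw_def sum_list_sum_nth atLeast0LessThan)

lemma phi_fun_S: "phi_fun w m t z = exp (of_real t * of_nat (Bw w) * z) * S w m 0 z"
proof -
  have e: "(\<Prod>j<length w. exp ((of_nat (is ! j) + of_real t) * of_nat (snd (w ! j)) * z))
      = exp (of_real t * of_nat (Bw w) * z) * wt w is z" for "is"
  proof -
    have "(\<Prod>j<length w. exp ((of_nat (is ! j) + of_real t) * of_nat (snd (w ! j)) * z))
        = (\<Prod>j<length w. exp (of_real t * of_nat (snd (w ! j)) * z) * exp (of_nat (is ! j) * of_nat (snd (w ! j)) * z))"
      by (rule prod.cong) (auto simp: exp_add[symmetric] algebra_simps)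
    also have "\<dots> = exp (\<Sum>j<length w. of_real t * of_nat (snd (w ! j)) * z) * wt w is z"
      by (simp add: prod.distrib exp_sum wt_def)
    also have "(\<Sum>j<length w. of_real t * of_nat (snd (w ! j)) * z) = of_real t * of_nat (Bw w) * z"
      by (simp add: sum_distrib_left sum_distrib_right Bw_sum[symmetric] mult.assoc)
    finally show ?thesis .
  qed
  show ?thesis
    unfolding phi_fun_def tuples_tup S_def e by (rule infsum_cmult_right')
qed

definition evr :: "rat poly \<Rightarrow> real \<Rightarrow> complex" where
  "evr p t = complex_of_real (poly (map_poly real_of_rat p) t)"

lemma of_real_of_rat: "of_real (of_rat q) = (of_rat q :: 'a::{real_field,field_char_0})"
  by (cases q) (simp add: of_rat_rat of_real_divide)

lemma map_poly_of_rat_add: "map_poly (real_of_rat) (p + q) = map_poly real_of_rat p + map_poly real_of_rat q"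
  by (rule poly_eqI) (simp add: coeff_map_poly of_rat_add)

lemma map_poly_of_rat_mult: "map_poly (real_of_rat) (p * q) = map_poly real_of_rat p * map_poly real_of_rat q"
  by (rule poly_eqI) (simp add: coeff_map_poly coeff_mult of_rat_sum of_rat_mult)

lemma evr_add: "evr (p + q) t = evr p t + evr q t"
  by (simp add: evr_def map_poly_of_rat_add)
lemma evr_mult: "evr (p * q) t = evr p t * evr q t"
  by (simp add: evr_def map_poly_of_rat_mult)
lemma evr_0 [simp]: "evr 0 t = 0"
  by (simp add: evr_def)
lemma evr_1 [simp]: "evr 1 t = 1"
  by (simp add: evr_def)
lemma evr_sum: "evr (\<Sum>i\<in>A. f i) t = (\<Sum>i\<in>A. evr (f i) t)"
  by (induction A rule: infinite_finite_induct) (auto simp: evr_add)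
lemma evr_sum_list: "evr (\<Sum>x\<leftarrow>xs. f x) t = (\<Sum>x\<leftarrow>xs. evr (f x) t)"
  by (induction xs) (auto simp: evr_add)
lemma evr_monom: "evr (monom c k) t = of_rat c * of_real t ^ k"
  by (simp add: evr_def map_poly_monom poly_monom of_real_of_rat)
lemma evr_const: "evr [:c:] t = of_rat c"
  using evr_monom[of c 0 t] by (simp add: monom_0)

lemma infinite_nonneg_reals: "infinite {t::real. 0 \<le> t}"
proof
  assume "finite {t::real. 0 \<le> t}"
  moreover have "range real \<subseteq> {t::real. 0 \<le> t}" by auto
  ultimately have "finite (range real)" by (rule finite_subset[rotated])
  then show False using finite_imageD[of real UNIV] by (simp add: inj_on_def)
qed

lemma evr_inj:
  assumes "\<And>t. 0 \<le> t \<Longrightarrow> evr p t = evr q t"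
  shows "p = q"
proof -
  let ?d = "map_poly real_of_rat p - map_poly real_of_rat q"
  have "{t. 0 \<le> t} \<subseteq> {t. poly ?d t = 0}"
    using assms by (auto simp: evr_def)
  then have "?d = 0"
    using poly_roots_finite[of ?d] infinite_nonneg_reals finite_subset by blast
  then have "map_poly real_of_rat p = map_poly real_of_rat q" by simp
  then have "coeff p n = coeff q n" for n
    by (metis coeff_map_poly of_rat_0 of_rat_eq_iff)
  then show ?thesis by (rule poly_eqI)
qed

lemma phi_poly_char:
  assumes "\<And>t. 0 \<le> t \<Longrightarrow> laurent_coeff (phi_fun w m t) n = evr p t"
  shows "phi_poly w m n = p"
  unfolding phi_poly_def
proof (rule the_equality)
  show "\<forall>t\<ge>0. laurent_coeff (phi_fun w m t) n = complex_of_real (poly (map_poly real_of_rat p) t)"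
    using assms by (simp add: evr_def)
  fix q assume "\<forall>t\<ge>0. laurent_coeff (phi_fun w m t) n = complex_of_real (poly (map_poly real_of_rat q) t)"
  then show "q = p" using assms by (intro evr_inj) (simp add: evr_def)
qed

definition Et :: "real \<Rightarrow> nat \<Rightarrow> complex fls" where
  "Et t B = fps_to_fls (fps_exp (of_real t * of_nat B))"

lemma hlel_Et: "has_laurent_expansion_left (\<lambda>z. exp (of_real t * of_nat B * z)) (Et t B)"
  unfolding Et_def by (intro hle_imp_hlel has_laurent_expansion_fps has_fps_expansion_exp)

definition pn :: "nat \<Rightarrow> nat \<Rightarrow> rat fls \<Rightarrow> int \<Rightarrow> rat poly" where
  "pn N B Q n = (\<Sum>i\<in>{0..n + int N}. monom (of_nat B ^ nat i / fact (nat i) * Q $$ (n - i)) (nat i))"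

lemma Et_mult_nth:
  assumes Q: "\<forall>n < - int N. Q $$ n = 0"
  shows "(Et t B * mapQ Q) $$ n = evr (pn N B Q n) t"
proof -
  have "(Et t B * mapQ Q) $$ n = (\<Sum>i\<in>{0..n + int N}. Et t B $$ i * mapQ Q $$ (n - i))"
    by (subst fls_mult_nth_bounds'[where a = 0 and b = "- int N"]) (auto simp: Et_def Q)
  also have "\<dots> = evr (pn N B Q n) t"
    unfolding pn_def evr_sum
    by (rule sum.cong) (auto simp: Et_def evr_monom fps_exp_nth of_rat_mult of_rat_divide of_rat_power
        of_rat_fact power_mult_distrib)
  finally show ?thesis .
qed

lemma pn_zero: "n < - int N \<Longrightarrow> pn N B Q n = 0"
  by (simp add: pn_def)

lemma analytic_main:
  assumes b: "is_basis w"
  shows "\<exists>Fx. (\<forall>t\<ge>0. has_laurent_expansion_left (phi_fun w m t) (Fx t)) \<and>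
     (\<forall>t\<ge>0. \<forall>n. Fx t $$ n = evr (phi_poly w m n) t) \<and>
     (\<forall>n < - int (length w). phi_poly w m n = 0)"
proof -
  obtain Q where Q: "\<forall>n < - int (length w). Q $$ n = 0" "has_laurent_expansion_left (S w m 0) (mapQ Q)"
    using goodL_S[OF b, of m 0] by (auto simp: goodL_def)
  define Fx where "Fx t = Et t (Bw w) * mapQ Q" for t
  have h: "has_laurent_expansion_left (phi_fun w m t) (Fx t)" for t
  proof -
    have "has_laurent_expansion_left (\<lambda>z. exp (of_real t * of_nat (Bw w) * z) * S w m 0 z) (Fx t)"
      unfolding Fx_def by (rule hlel_mult[OF hlel_Et Q(2)])
    then show ?thesis by (rule hlel_cong) (simp add: phi_fun_S)
  qed
  have pp: "phi_poly w m n = pn (length w) (Bw w) Q n" for n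
  proof (rule phi_poly_char)
    fix t :: real assume "0 \<le> t"
    have "laurent_coeff (phi_fun w m t) n = Fx t $$ n" by (rule laurent_coeff_eq[OF h])
    also have "\<dots> = evr (pn (length w) (Bw w) Q n) t" unfolding Fx_def by (rule Et_mult_nth[OF Q(1)])
    finally show "laurent_coeff (phi_fun w m t) n = evr (pn (length w) (Bw w) Q n) t" .
  qed
  have c2: "\<forall>t\<ge>0. \<forall>n. Fx t $$ n = evr (phi_poly w m n) t"
    by (simp add: pp Fx_def Et_mult_nth[OF Q(1)])
  have c3: "\<forall>n < - int (length w). phi_poly w m n = 0"
    by (simp add: pp pn_zero)
  show ?thesis using h c2 c3 by blast
qed


definition tupN :: "word \<Rightarrow> mono \<Rightarrow> nat \<Rightarrow> nat \<Rightarrow> nat list set" where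
  "tupN w m a N = {js \<in> tup w m a. \<forall>i\<in>set js. i \<le> N}"

definition SN :: "word \<Rightarrow> mono \<Rightarrow> nat \<Rightarrow> nat \<Rightarrow> complex \<Rightarrow> complex" where
  "SN w m a N z = (\<Sum>js\<in>tupN w m a N. wt w js z)"

lemma finite_tupN: "finite (tupN w m a N)"
proof (rule finite_subset)
  show "tupN w m a N \<subseteq> {js. set js \<subseteq> {..N} \<and> length js = length w}"
    by (auto simp: tupN_def tup_def)
  show "finite {js. set js \<subseteq> {..N} \<and> length js = length w}"
    by (rule finite_lists_length_eq) simp
qed

lemma tupN_Nil: "tupN [] m a N = (if m = 0 then {[]} else {})"
  by (auto simp: tupN_def tup_Nil)

lemma SN_Nil: "SN [] m a N z = (if m = 0 then 1 else 0)"
  by (simp add: SN_def tupN_Nil)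

lemma tupN_Cons: "tupN (c # w) m a N = (\<lambda>(i, js). i # js) `
   (SIGMA i:{i. a < i \<and> i \<le> N \<and> fst c \<le> lk m i}. tupN w (m - Poly_Mapping.single i (fst c)) i N)"
  unfolding tupN_def tup_Cons by auto

lemma SN_Cons: "SN (c # w) m a N z = (\<Sum>i\<in>{i. a < i \<and> i \<le> N \<and> fst c \<le> lk m i}.
     exp (of_nat i * of_nat (snd c) * z) * SN w (m - Poly_Mapping.single i (fst c)) i N z)"
proof -
  define A where "A = {i. a < i \<and> i \<le> N \<and> fst c \<le> lk m i}"
  have finA: "finite A" by (rule finite_subset[of _ "{..N}"]) (auto simp: A_def)
  have "SN (c # w) m a N z = (\<Sum>(i, js)\<in>Sigma A (\<lambda>i. tupN w (m - Poly_Mapping.single i (fst c)) i N).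
          wt (c # w) (i # js) z)"
    unfolding SN_def tupN_Cons A_def[symmetric]
    by (subst sum.reindex[OF inj_cons]) (simp add: split_beta)
  also have "\<dots> = (\<Sum>i\<in>A. \<Sum>js\<in>tupN w (m - Poly_Mapping.single i (fst c)) i N. wt (c # w) (i # js) z)"
    by (rule sum.Sigma[symmetric]) (auto simp: finA finite_tupN)
  also have "\<dots> = (\<Sum>i\<in>A. exp (of_nat i * of_nat (snd c) * z) * SN w (m - Poly_Mapping.single i (fst c)) i N z)"
    by (simp add: SN_def wt_Cons sum_distrib_left)
  finally show ?thesis by (simp add: A_def)
qed

lemma tupN_lim: "filterlim (\<lambda>N. tupN w m a N) (finite_subsets_at_top (tup w m a)) sequentially"
  unfolding filterlim_def le_filter_def eventually_filtermap
proof (intro allI impI)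
  fix P assume "eventually P (finite_subsets_at_top (tup w m a))"
  then have "\<exists>X. finite X \<and> X \<subseteq> tup w m a \<and> (\<forall>Y. finite Y \<and> X \<subseteq> Y \<and> Y \<subseteq> tup w m a \<longrightarrow> P Y)"
    by (simp only: eventually_finite_subsets_at_top)
  then obtain X where X: "finite X" "X \<subseteq> tup w m a"
    and P0: "\<forall>Y. finite Y \<and> X \<subseteq> Y \<and> Y \<subseteq> tup w m a \<longrightarrow> P Y"
    by (elim exE conjE)
  have P: "P Y" if "finite Y" "X \<subseteq> Y" "Y \<subseteq> tup w m a" for Y
    using P0 that by blast
  define N0 where "N0 = Max (insert 0 (\<Union>js\<in>X. set js))"
  have fin: "finite (insert 0 (\<Union>js\<in>X. set js))" using X(1) by simp
  show "eventually (\<lambda>N. P (tupN w m a N)) sequentially"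
    unfolding eventually_sequentially
  proof (intro exI allI impI)
    fix N assume N: "N0 \<le> N"
    show "P (tupN w m a N)"
    proof (rule P)
      show "finite (tupN w m a N)" by (rule finite_tupN)
      show "X \<subseteq> tupN w m a N"
      proof
        fix js assume js: "js \<in> X"
        have "\<forall>i\<in>set js. i \<le> N"
        proof
          fix i assume "i \<in> set js"
          then have "i \<in> insert 0 (\<Union>js\<in>X. set js)" using js by blast
          then have "i \<le> N0" unfolding N0_def by (rule Max_ge[OF fin])
          then show "i \<le> N" using N by simp
        qed
        then show "js \<in> tupN w m a N" using js X(2) by (auto simp: tupN_def)
      qed
      show "tupN w m a N \<subseteq> tup w m a" by (auto simp: tupN_def)
    qed
  qed
qed

lemma SN_lim:
  assumes z: "Re z < 0" and b: "is_basis w"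
  shows "(\<lambda>N. SN w m a N z) \<longlonglongrightarrow> S w m a z"
proof -
  have lim: "((\<lambda>F. sum (\<lambda>js. wt w js z) F) \<longlongrightarrow> S w m a z) (finite_subsets_at_top (tup w m a))"
    unfolding S_def by (rule infsum_tendsto[OF wt_summable[OF z b]])
  show ?thesis
    unfolding SN_def using filterlim_compose[OF lim tupN_lim] .
qed

section \<open>Complex coefficient ring\<close>

definition cst :: "complex \<Rightarrow> complex mps" where
  "cst c = Abs_mps (\<lambda>m. if m = 0 then c else 0)"
definition Xm :: "nat \<Rightarrow> nat \<Rightarrow> complex mps" where
  "Xm i k = Abs_mps (\<lambda>m. if m = Poly_Mapping.single i k then 1 else 0)"

lemma mpc_cst [simp]: "mpc (cst c) m = (if m = 0 then c else 0)"
  by (simp add: cst_def Abs_mps_inverse)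
lemma mpc_Xm [simp]: "mpc (Xm i k) m = (if m = Poly_Mapping.single i k then 1 else 0)"
  by (simp add: Xm_def Abs_mps_inverse)

lemma spl_single_sum:
  fixes g :: "mono \<Rightarrow> mono \<Rightarrow> complex"
  shows "(\<Sum>p\<in>spl m. (if fst p = x then 1 else 0) * g (fst p) (snd p)) =
     (if (\<forall>k. lk x k \<le> lk m k) then g x (m - x) else 0)"
proof (cases "\<forall>k. lk x k \<le> lk m k")
  case True
  have xm: "x + (m - x) = m"
    by (rule poly_mapping_eqI) (use True in \<open>auto simp: lookup_add lookup_minus\<close>)
  have mem: "(x, m - x) \<in> spl m" using xm by (simp add: spl_def)
  have "(\<Sum>p\<in>spl m. (if fst p = x then 1 else 0) * g (fst p) (snd p)) = g x (m - x)"
  proof (subst sum.remove[OF finite_spl mem])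
    have "(\<Sum>p\<in>spl m - {(x, m - x)}. (if fst p = x then 1 else 0) * g (fst p) (snd p)) = 0"
    proof (rule sum.neutral, rule ballI)
      fix p assume p: "p \<in> spl m - {(x, m - x)}"
      show "(if fst p = x then 1 else 0) * g (fst p) (snd p) = 0"
      proof (cases "fst p = x")
        case True
        then have "snd p = m - x" using p by (auto simp: spl_def)
        then show ?thesis using p True by (cases p) auto
      qed simp
    qed
    then show "(if fst (x, m - x) = x then 1 else 0) * g (fst (x, m - x)) (snd (x, m - x)) +
      (\<Sum>p\<in>spl m - {(x, m - x)}. (if fst p = x then 1 else 0) * g (fst p) (snd p)) = g x (m - x)"
      by simp
  qed
  then show ?thesis using True by simp
next
  case False
  have "(if fst p = x then 1 else 0) * g (fst p) (snd p) = 0" if "p \<in> spl m" for p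
  proof (cases "fst p = x")
    case True
    then have "m = x + snd p" using that by (auto simp: spl_def)
    then have "\<forall>k. lk x k \<le> lk m k" by (simp add: lookup_add)
    then show ?thesis using False by blast
  qed simp
  then have "(\<Sum>p\<in>spl m. (if fst p = x then 1 else 0) * g (fst p) (snd p)) = 0"
    by (intro sum.neutral) blast
  then show ?thesis using False by auto
qed

lemma mpc_cst_mult: "mpc (cst c * F) m = c * mpc F m"
proof -
  have "mpc (cst c * F) m = (\<Sum>p\<in>spl m. (if fst p = 0 then 1 else 0) * (c * mpc F (snd p)))"
    unfolding times_mps.rep_eq by (rule sum.cong) auto
  also have "\<dots> = c * mpc F m"
    using spl_single_sum[where m = m and x = 0 and g = "\<lambda>_ y. c * mpc F y"] by simp
  finally show ?thesis .
qed

lemma mpc_Xm_mult: "mpc (Xm i k * F) m = (if k \<le> lk m i then mpc F (m - Poly_Mapping.single i k) else 0)"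
proof -
  have "mpc (Xm i k * F) m = (\<Sum>p\<in>spl m. (if fst p = Poly_Mapping.single i k then 1 else 0) * mpc F (snd p))"
    by (simp add: times_mps.rep_eq)
  also have "\<dots> = (if (\<forall>j. lk (Poly_Mapping.single i k) j \<le> lk m j) then mpc F (m - Poly_Mapping.single i k) else 0)"
    using spl_single_sum[where m = m and x = "Poly_Mapping.single i k" and g = "\<lambda>_ y. mpc F y"] by simp
  also have "(\<forall>j. lk (Poly_Mapping.single i k) j \<le> lk m j) \<longleftrightarrow> k \<le> lk m i"
    by (auto simp: lk_single)
  finally show ?thesis .
qed

lemma cst_cst: "cst a * cst b = cst (a * b)"
  by (rule mps_eqI) (simp add: mpc_cst_mult)

lemma Xm_Xm: "Xm i k * Xm i l = Xm i (k + l)"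
proof (rule mps_eqI)
  fix m
  have "(k \<le> lk m i \<and> m - Poly_Mapping.single i k = Poly_Mapping.single i l) \<longleftrightarrow> m = Poly_Mapping.single i (k + l)"
  proof
    assume h: "k \<le> lk m i \<and> m - Poly_Mapping.single i k = Poly_Mapping.single i l"
    have hk: "k \<le> lk m i" using h by simp
    have eq: "Poly_Mapping.single i k + (m - Poly_Mapping.single i k) = m"
      by (rule poly_mapping_eqI) (use hk in \<open>auto simp: lookup_add lookup_minus lk_single\<close>)
    have "m = Poly_Mapping.single i k + Poly_Mapping.single i l" using eq h by simp
    then show "m = Poly_Mapping.single i (k + l)" by (simp add: single_add)
  next
    assume mk: "m = Poly_Mapping.single i (k + l)"
    have "lk m i = k + l" using mk by (simp add: lk_single)
    moreover have "m - Poly_Mapping.single i k = Poly_Mapping.single i l"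
      by (rule poly_mapping_eqI) (simp add: lookup_minus lk_single mk)
    ultimately show "k \<le> lk m i \<and> m - Poly_Mapping.single i k = Poly_Mapping.single i l"
      by simp
  qed
  then have iff: "(k \<le> lk m i \<and> m - Poly_Mapping.single i k = Poly_Mapping.single i l) = (m = Poly_Mapping.single i (k + l))" .
  have "mpc (Xm i k * Xm i l) m = (if k \<le> lk m i \<and> m - Poly_Mapping.single i k = Poly_Mapping.single i l then 1 else 0)"
    by (simp add: mpc_Xm_mult)
  also have "\<dots> = (if m = Poly_Mapping.single i (k + l) then 1 else 0)"
    by (simp only: iff)
  finally show "mpc (Xm i k * Xm i l) m = mpc (Xm i (k + l)) m" by simp
qed

definition G :: "nat \<Rightarrow> word \<Rightarrow> nat \<Rightarrow> complex \<Rightarrow> complex mps" where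
  "G N w a z = Abs_mps (\<lambda>m. SN w m a N z)"

lemma mpc_G [simp]: "mpc (G N w a z) m = SN w m a N z"
  by (simp add: G_def Abs_mps_inverse)

lemma G_Nil: "G N [] a z = 1"
  by (rule mps_eqI) (simp add: SN_Nil one_mps.rep_eq)

definition ee :: "nat \<Rightarrow> col \<Rightarrow> complex \<Rightarrow> complex" where
  "ee i c z = exp (of_nat i * of_nat (snd c) * z)"

lemma G_Cons: "G N (c # w) a z = (\<Sum>i\<in>{a<..N}. cst (ee i c z) * Xm i (fst c) * G N w i z)"
proof (rule mps_eqI)
  fix m
  have "mpc (\<Sum>i\<in>{a<..N}. cst (ee i c z) * Xm i (fst c) * G N w i z) m
     = (\<Sum>i\<in>{a<..N}. if fst c \<le> lk m i then ee i c z * SN w (m - Poly_Mapping.single i (fst c)) i N z else 0)"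
    by (simp add: mpc_sum mult.assoc mpc_cst_mult mpc_Xm_mult mpc_G if_distrib cong: if_cong)
  also have "\<dots> = (\<Sum>i\<in>{i. a < i \<and> i \<le> N \<and> fst c \<le> lk m i}. ee i c z * SN w (m - Poly_Mapping.single i (fst c)) i N z)"
    by (subst sum.inter_filter[symmetric]) (auto intro!: sum.cong)
  also have "\<dots> = mpc (G N (c # w) a z) m"
    by (simp add: SN_Cons ee_def)
  finally show "mpc (G N (c # w) a z) m = mpc (\<Sum>i\<in>{a<..N}. cst (ee i c z) * Xm i (fst c) * G N w i z) m" ..
qed

lemma split3:
  fixes f :: "nat \<Rightarrow> nat \<Rightarrow> 'a::comm_monoid_add"
  shows "(\<Sum>i\<in>{a<..N}. \<Sum>j\<in>{a<..N}. f i j) =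
    (\<Sum>i\<in>{a<..N}. \<Sum>j\<in>{i<..N}. f i j) + (\<Sum>j\<in>{a<..N}. \<Sum>i\<in>{j<..N}. f i j) + (\<Sum>i\<in>{a<..N}. f i i)"
proof (induction N)
  case 0 then show ?case by simp
next
  case (Suc N)
  show ?case
  proof (cases "a \<le> N")
    case False
    then have "{a<..Suc N} = {}" by auto
    then show ?thesis by simp
  next
    case True
    have I: "{a<..Suc N} = insert (Suc N) {a<..N}" using True by auto
    have J: "{i<..Suc N} = insert (Suc N) {i<..N}" if "i \<in> {a<..N}" for i using that by auto
    have E: "{Suc N<..Suc N} = {}" by simp
    have L: "(\<Sum>i\<in>{a<..Suc N}. \<Sum>j\<in>{a<..Suc N}. f i j)
        = (\<Sum>i\<in>{a<..N}. \<Sum>j\<in>{a<..N}. f i j) + (\<Sum>j\<in>{a<..N}. f (Suc N) j)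
          + (\<Sum>i\<in>{a<..N}. f i (Suc N)) + f (Suc N) (Suc N)"
      unfolding I by (simp add: sum.distrib algebra_simps)
    moreover have "(\<Sum>i\<in>{a<..Suc N}. \<Sum>j\<in>{i<..Suc N}. f i j)
        = (\<Sum>i\<in>{a<..N}. \<Sum>j\<in>{i<..N}. f i j) + (\<Sum>i\<in>{a<..N}. f i (Suc N))"
    proof -
      have "(\<Sum>i\<in>{a<..N}. \<Sum>j\<in>{i<..Suc N}. f i j) = (\<Sum>i\<in>{a<..N}. (\<Sum>j\<in>{i<..N}. f i j) + f i (Suc N))"
        by (rule sum.cong[OF refl]) (simp add: J add.commute)
      then show ?thesis unfolding I by (simp add: E sum.distrib)
    qed
    moreover have "(\<Sum>j\<in>{a<..Suc N}. \<Sum>i\<in>{j<..Suc N}. f i j)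
        = (\<Sum>j\<in>{a<..N}. \<Sum>i\<in>{j<..N}. f i j) + (\<Sum>j\<in>{a<..N}. f (Suc N) j)"
    proof -
      have "(\<Sum>j\<in>{a<..N}. \<Sum>i\<in>{j<..Suc N}. f i j) = (\<Sum>j\<in>{a<..N}. (\<Sum>i\<in>{j<..N}. f i j) + f (Suc N) j)"
        by (rule sum.cong[OF refl]) (simp add: J add.commute)
      then show ?thesis unfolding I by (simp add: E sum.distrib)
    qed
    moreover have "(\<Sum>i\<in>{a<..Suc N}. f i i) = (\<Sum>i\<in>{a<..N}. f i i) + f (Suc N) (Suc N)"
      unfolding I by (simp add: add.commute)
    ultimately show ?thesis using Suc.IH L by (simp add: algebra_simps)
  qed
qed

lemma sum_sum_list_swap:
  "(\<Sum>i\<in>A. \<Sum>w\<leftarrow>ws. f i w) = (\<Sum>w\<leftarrow>ws. \<Sum>i\<in>A. f i w :: 'a::comm_monoid_add)"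
  by (induction ws) (auto simp: sum.distrib)

lemma sum_list_mult_left: "c * (\<Sum>w\<leftarrow>ws. f w) = (\<Sum>w\<leftarrow>ws. c * f w :: 'a::comm_ring_1)"
  by (induction ws) (auto simp: distrib_left)

lemma G_qsh: "G N u a z * G N v a z = (\<Sum>w\<leftarrow>qsh u v. G N w a z)"
proof (induction u v arbitrary: a rule: qsh.induct)
  case (1 v) then show ?case by (simp add: G_Nil)
next
  case (2 c u) then show ?case by (simp add: G_Nil)
next
  case (3 c u d v)
  define I where "I = {a<..N}"
  define x where "x i = cst (ee i c z) * Xm i (fst c)" for i
  define y where "y j = cst (ee j d z) * Xm j (fst d)" for j
  define f where "f i j = (x i * G N u i z) * (y j * G N v j z)" for i j
  have xy: "x i * y i = cst (ee i (col_add c d) z) * Xm i (fst (col_add c d))" for i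
  proof -
    have e: "ee i c z * ee i d z = ee i (col_add c d) z"
      by (simp add: ee_def col_add_def exp_add[symmetric] algebra_simps)
    have "x i * y i = (cst (ee i c z) * cst (ee i d z)) * (Xm i (fst c) * Xm i (fst d))"
      by (simp add: x_def y_def mult_ac)
    also have "\<dots> = cst (ee i (col_add c d) z) * Xm i (fst (col_add c d))"
      by (simp only: cst_cst Xm_Xm e) (simp add: col_add_def)
    finally show ?thesis .
  qed
  have Gc: "G N (c # u) i z = (\<Sum>j\<in>{i<..N}. x j * G N u j z)" for i
    by (simp add: G_Cons x_def)
  have Gd: "G N (d # v) i z = (\<Sum>j\<in>{i<..N}. y j * G N v j z)" for i
    by (simp add: G_Cons y_def)
  have "G N (c # u) a z * G N (d # v) a z = (\<Sum>i\<in>I. \<Sum>j\<in>I. f i j)"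
    by (simp add: Gc Gd I_def f_def sum_product)
  also have "\<dots> = (\<Sum>i\<in>I. \<Sum>j\<in>{i<..N}. f i j) + (\<Sum>j\<in>I. \<Sum>i\<in>{j<..N}. f i j) + (\<Sum>i\<in>I. f i i)"
    unfolding I_def by (rule split3)
  also have "(\<Sum>i\<in>I. \<Sum>j\<in>{i<..N}. f i j) = (\<Sum>w\<leftarrow>qsh u (d # v). G N (c # w) a z)"
  proof -
    have "(\<Sum>i\<in>I. \<Sum>j\<in>{i<..N}. f i j) = (\<Sum>i\<in>I. x i * (G N u i z * G N (d # v) i z))"
      by (simp add: f_def Gd sum_distrib_left mult_ac)
    also have "\<dots> = (\<Sum>i\<in>I. \<Sum>w\<leftarrow>qsh u (d # v). x i * G N w i z)"
      by (simp add: "3.IH"(1) sum_list_mult_left)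
    also have "\<dots> = (\<Sum>w\<leftarrow>qsh u (d # v). G N (c # w) a z)"
      by (simp add: sum_sum_list_swap G_Cons x_def I_def)
    finally show ?thesis .
  qed
  also have "(\<Sum>j\<in>I. \<Sum>i\<in>{j<..N}. f i j) = (\<Sum>w\<leftarrow>qsh (c # u) v. G N (d # w) a z)"
  proof -
    have "(\<Sum>j\<in>I. \<Sum>i\<in>{j<..N}. f i j) = (\<Sum>j\<in>I. y j * (G N (c # u) j z * G N v j z))"
      by (simp add: f_def Gc sum_distrib_left sum_distrib_right mult_ac)
    also have "\<dots> = (\<Sum>j\<in>I. \<Sum>w\<leftarrow>qsh (c # u) v. y j * G N w j z)"
      by (simp add: "3.IH"(2) sum_list_mult_left)
    also have "\<dots> = (\<Sum>w\<leftarrow>qsh (c # u) v. G N (d # w) a z)"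
      by (simp add: sum_sum_list_swap G_Cons y_def I_def)
    finally show ?thesis .
  qed
  also have "(\<Sum>i\<in>I. f i i) = (\<Sum>w\<leftarrow>qsh u v. G N (col_add c d # w) a z)"
  proof -
    have "(\<Sum>i\<in>I. f i i) = (\<Sum>i\<in>I. (x i * y i) * (G N u i z * G N v i z))"
      by (simp add: f_def mult_ac)
    also have "\<dots> = (\<Sum>i\<in>I. \<Sum>w\<leftarrow>qsh u v. (x i * y i) * G N w i z)"
      by (simp add: "3.IH"(3) sum_list_mult_left)
    also have "\<dots> = (\<Sum>w\<leftarrow>qsh u v. G N (col_add c d # w) a z)"
      by (simp add: sum_sum_list_swap G_Cons xy I_def)
    finally show ?thesis .
  qed
  finally show ?case by (simp add: comp_def)
qed

lemma SN_qsh: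
  "(\<Sum>p\<in>spl m. SN u (fst p) a N z * SN v (snd p) a N z) = (\<Sum>w\<leftarrow>qsh u v. SN w m a N z)"
proof -
  have "mpc (G N u a z * G N v a z) m = mpc (\<Sum>w\<leftarrow>qsh u v. G N w a z) m"
    by (simp add: G_qsh)
  then show ?thesis by (simp add: times_mps.rep_eq mpc_sum_list')
qed

lemma tendsto_sum_list:
  "(\<And>x. x \<in> set xs \<Longrightarrow> (f x \<longlongrightarrow> l x) F) \<Longrightarrow> ((\<lambda>n. \<Sum>x\<leftarrow>xs. f x n) \<longlongrightarrow> (\<Sum>x\<leftarrow>xs. l x)) F"
  for f :: "'b \<Rightarrow> 'c \<Rightarrow> 'a::topological_monoid_add"
  by (induction xs) (auto intro!: tendsto_add)

lemma S_qsh: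
  assumes z: "Re z < 0" and bu: "is_basis u" and bv: "is_basis v"
  shows "(\<Sum>p\<in>spl m. S u (fst p) a z * S v (snd p) a z) = (\<Sum>w\<leftarrow>qsh u v. S w m a z)"
proof -
  have l1: "(\<lambda>N. \<Sum>p\<in>spl m. SN u (fst p) a N z * SN v (snd p) a N z) \<longlonglongrightarrow>
      (\<Sum>p\<in>spl m. S u (fst p) a z * S v (snd p) a z)"
    by (intro tendsto_sum tendsto_mult SN_lim z bu bv)
  have l2: "(\<lambda>N. \<Sum>w\<leftarrow>qsh u v. SN w m a N z) \<longlonglongrightarrow> (\<Sum>w\<leftarrow>qsh u v. S w m a z)"
    by (intro tendsto_sum_list SN_lim z is_basis_qsh[OF bu bv])
  show ?thesis using LIMSEQ_unique[OF l1] l2 by (simp add: SN_qsh)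
qed

lemma Bw_qsh: "w \<in> set (qsh u v) \<Longrightarrow> Bw w = Bw u + Bw v"
  by (induction u v arbitrary: w rule: qsh.induct) (auto simp: col_add_def Bw_def)

lemma phi_fun_qsh:
  assumes z: "Re z < 0" and bu: "is_basis u" and bv: "is_basis v"
  shows "(\<Sum>p\<in>spl m. phi_fun u (fst p) t z * phi_fun v (snd p) t z) = (\<Sum>w\<leftarrow>qsh u v. phi_fun w m t z)"
proof -
  define E where "E w = exp (of_real t * of_nat (Bw w) * z)" for w
  have Ew: "E w = E u * E v" if "w \<in> set (qsh u v)" for w
    using Bw_qsh[OF that] by (simp add: E_def exp_add[symmetric] algebra_simps)
  have pf: "phi_fun w m' t z = E w * S w m' 0 z" for w m' by (simp add: phi_fun_S E_def)
  have "(\<Sum>p\<in>spl m. phi_fun u (fst p) t z * phi_fun v (snd p) t z)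
      = (\<Sum>p\<in>spl m. E u * E v * (S u (fst p) 0 z * S v (snd p) 0 z))"
    by (simp add: pf mult_ac)
  also have "\<dots> = E u * E v * (\<Sum>p\<in>spl m. S u (fst p) 0 z * S v (snd p) 0 z)"
    by (simp add: sum_distrib_left)
  also have "\<dots> = E u * E v * (\<Sum>w\<leftarrow>qsh u v. S w m 0 z)"
    by (simp add: S_qsh[OF z bu bv])
  also have "\<dots> = (\<Sum>w\<leftarrow>qsh u v. phi_fun w m t z)"
    by (simp add: sum_list_mult_left pf Ew cong: map_cong)
  finally show ?thesis .
qed


lemma fact_bound:
  "is_basis w \<Longrightarrow> n < - int (length w) \<Longrightarrow> phi_poly w m n = 0"
  using analytic_main by blast

lemma fact_nil: "phi_poly [] m n = (if m = 0 \<and> n = 0 then 1 else 0)"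
proof (rule phi_poly_char)
  fix t :: real assume "0 \<le> t"
  define c :: complex where "c = (if m = 0 then 1 else 0)"
  have h: "has_laurent_expansion_left (phi_fun [] m t) (fls_const c)"
  proof (rule hlel_cong[OF hle_imp_hlel[OF has_laurent_expansion_const]])
    fix z :: complex assume "Re z < 0"
    show "c = phi_fun [] m t z" by (simp add: phi_fun_S S_Nil c_def Bw_def)
  qed
  show "laurent_coeff (phi_fun [] m t) n = evr (if m = 0 \<and> n = 0 then 1 else 0) t"
    by (simp add: laurent_coeff_eq[OF h] c_def)
qed

definition FXP :: "word \<Rightarrow> mono \<Rightarrow> (real \<Rightarrow> complex fls) \<Rightarrow> bool" where
  "FXP w m Fx \<longleftrightarrow> (\<forall>t\<ge>0. has_laurent_expansion_left (phi_fun w m t) (Fx t)) \<and>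
     (\<forall>t\<ge>0. \<forall>n. Fx t $$ n = evr (phi_poly w m n) t)"

definition FX :: "word \<Rightarrow> mono \<Rightarrow> real \<Rightarrow> complex fls" where
  "FX w m = (SOME Fx. FXP w m Fx)"

lemma FX: assumes "is_basis w" shows "FXP w m (FX w m)"
proof -
  have "\<exists>Fx. FXP w m Fx" using analytic_main[OF assms, of m] by (auto simp: FXP_def)
  then show ?thesis unfolding FX_def by (rule someI_ex)
qed

lemma FX_hlel: "is_basis w \<Longrightarrow> 0 \<le> t \<Longrightarrow> has_laurent_expansion_left (phi_fun w m t) (FX w m t)"
  using FX by (auto simp: FXP_def)
lemma FX_nth: "is_basis w \<Longrightarrow> 0 \<le> t \<Longrightarrow> FX w m t $$ n = evr (phi_poly w m n) t"
  using FX by (auto simp: FXP_def)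

lemma fact_mult:
  assumes bu: "is_basis u" and bv: "is_basis v"
  shows "(\<Sum>i\<in>{- int (length u)..n + int (length v)}. \<Sum>p\<in>spl m. phi_poly u (fst p) i * phi_poly v (snd p) (n - i))
       = (\<Sum>w\<leftarrow>qsh u v. phi_poly w m n)"
proof (rule evr_inj)
  fix t :: real assume t: "0 \<le> t"
  define F1 where "F1 = (\<Sum>p\<in>spl m. FX u (fst p) t * FX v (snd p) t)"
  define F2 where "F2 = (\<Sum>w\<leftarrow>qsh u v. FX w m t)"
  have bw: "\<And>w. w \<in> set (qsh u v) \<Longrightarrow> is_basis w" using is_basis_qsh[OF bu bv] .
  have h1: "has_laurent_expansion_left (\<lambda>z. \<Sum>p\<in>spl m. phi_fun u (fst p) t z * phi_fun v (snd p) t z) F1"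
    unfolding F1_def by (intro hlel_sum hlel_mult FX_hlel bu bv t)
  have h1': "has_laurent_expansion_left (\<lambda>z. \<Sum>w\<leftarrow>qsh u v. phi_fun w m t z) F1"
    by (rule hlel_cong[OF h1]) (simp add: phi_fun_qsh bu bv)
  have h2: "has_laurent_expansion_left (\<lambda>z. \<Sum>w\<leftarrow>qsh u v. phi_fun w m t z) F2"
    unfolding F2_def by (intro hlel_sum_list FX_hlel bw t)
  have F12: "F1 = F2" using hlel_unique[OF h1' h2] .
  have zu: "FX u m1 t $$ i = 0" if "i < - int (length u)" for m1 i
    using that by (simp add: FX_nth bu t fact_bound)
  have zv: "FX v m2 t $$ i = 0" if "i < - int (length v)" for m2 i
    using that by (simp add: FX_nth bv t fact_bound)
  have "evr (\<Sum>i\<in>{- int (length u)..n + int (length v)}. \<Sum>p\<in>spl m. phi_poly u (fst p) i * phi_poly v (snd p) (n - i)) t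
      = (\<Sum>i\<in>{- int (length u)..n + int (length v)}. \<Sum>p\<in>spl m. FX u (fst p) t $$ i * FX v (snd p) t $$ (n - i))"
    by (simp add: evr_sum evr_mult FX_nth bu bv t)
  also have "\<dots> = (\<Sum>p\<in>spl m. \<Sum>i\<in>{- int (length u)..n + int (length v)}. FX u (fst p) t $$ i * FX v (snd p) t $$ (n - i))"
    by (rule sum.swap)
  also have "\<dots> = (\<Sum>p\<in>spl m. (FX u (fst p) t * FX v (snd p) t) $$ n)"
    by (rule sum.cong[OF refl], subst fls_mult_nth_bounds'[where a = "- int (length u)" and b = "- int (length v)"])
       (auto simp: zu zv)
  also have "\<dots> = F1 $$ n" by (simp add: F1_def fls_nth_sum)
  also have "\<dots> = F2 $$ n" by (simp add: F12)
  also have "\<dots> = (\<Sum>w\<leftarrow>qsh u v. evr (phi_poly w m n) t)"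
    unfolding F2_def fls_nth_sum_list using bw by (simp add: FX_nth t cong: map_cong)
  also have "\<dots> = evr (\<Sum>w\<leftarrow>qsh u v. phi_poly w m n) t"
    by (simp add: evr_sum_list)
  finally show "evr (\<Sum>i\<in>{- int (length u)..n + int (length v)}. \<Sum>p\<in>spl m. phi_poly u (fst p) i * phi_poly v (snd p) (n - i)) t
      = evr (\<Sum>w\<leftarrow>qsh u v. phi_poly w m n) t" .
qed

interpretation AF: analytic_facts
  apply unfold_locales
    apply (erule (1) fact_bound)
   apply (rule fact_nil)
  apply (erule (1) fact_mult)
  done

theorem corollary4p2:
  assumes "is_basis u" and "is_basis v"
  shows "xt_mul (Zq u) (Zq v) = Zsum (qsh u v)"
  using AF.main[OF assms] .


end
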